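(* Assume there exists a subset $S\subseteq\{1,\dots,d\}$ that is e-invariant with respect to $\mathcal E$, and assume that every $S\subseteq\{1,\dots,d\}$ that is e-invariant with respect to $\mathcal E^{\mathrm{tr}}$ is also e-invariant with respect to $\mathcal E^{\mathrm{tr}}\cup[e^{\mathrm{tst}}]$. Let $e\in\mathcal E^{\mathrm{tr}}$ be arbitrary, for every $S\in\mathcal S^{\mathrm{e\text{-}inv}}_{\mathcal E^{\mathrm{tr}}}$ let $\pi^S\in\Pi^S_{\mathrm{opt}}$, let $$S^*\in\operatorname*{argmax}_{S\in\mathcal S^{\mathrm{e\text{-}inv}}_{\mathcal E^{\mathrm{tr}}}}\mathbb E^{e^{\mathrm{tst}}}\Big[\sum_{t\in\mathcal T}\tau^S_e(X^S,t)\,\pi^S(t\mid X)\Big],$$ and let $\pi^{\mathrm{e\text{-}inv}}:=\pi^{S^*}$. Then: (i) $\max_{t\in\mathcal T}\mathbb E^{e^{\mathrm{tst}},\pi_t}[Y]\le\mathbb E^{e^{\mathrm{tst}},\pi^{\mathrm{e\text{-}inv}}}[Y]$. (ii) If in addition there exist $e'\in[e^{\mathrm{tst}}]$ and $S'\in\mathcal S^{\mathrm{e\text{-}inv}}_{\mathcal E}$ such that $\max_{t\in\mathcal T}\tau_{e'}(x,t)=\max_{t\in\mathcal T}\tau^{S'}_{e'}(x^{S'},t)$ for all $x\in\mathcal X$, then $V^{[e^{\mathrm{tst}}]}(\pi^{\mathrm{e\text{-}inv}})\ge V^{[e^{\mathrm{tst}}]}(\pi)$ for all $\pi\in\Pi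$.
   Context: Multi-environment policy learning setting. Let $\mathcal E\subset\mathbb R$ be a set of environments, $\mathcal X\subseteq\mathbb R^d$, $\mathcal U\subseteq\mathbb R^p$, $\mathcal T=\{1,\dots,k\}$ a finite set of treatments, $\Delta(\mathcal T)$ the probability simplex over $\mathcal T$, and $\Pi=\{\pi:\mathcal X\to\Delta(\mathcal T)\}$ the set of policies; write $\pi(t\mid x):=\pi(x)(t)$. For each $e\in\mathcal E$ let $\mathbb P^e_{X,U}$ be a distribution on $\mathcal X\times\mathcal U$, and for each $e,x,u,t$ a distribution $\mathbb P^e_{Y\mid X=x,U=u,T=t}$ on $\mathbb R$. For $e\in\mathcal E$, $\pi\in\Pi$, $(Y,X,U,T)$ is defined by $(X,U)\sim\mathbb P^e_{X,U}$, $T\sim\pi(X)$, $Y\sim\mathbb P^e_{Y\mid X,U,T}$; expectations are denoted $\mathbb E^{e,\pi}$ ($\pi$ dropped for quantities of $(X,U)$ only). Joint laws have densities with respect to a common product measure, and $\mathbb P^e_X$ has full support on $\mathcal X$. Training observations $(Y_i,X_i,T_i,\pi_i,e_i)_{i=1}^n$: environments $e_i$ and policies $\pi_i$ fixed, $(X_i,U_i)\sim\mathbb P^{e_i}_{X,U}$, $T_i\sim\pi_i(X_i)$, $Y_i\sim\mathbb P^{e_i}_{Y\mid X=X_i,U=U_i,T=T_i}$, independently over $i$; the training policies satisfy $\pi_i(t\mid x)>0$ for all $i,t,x$. $\mathcal E^{\mathrm{tr}}\subseteq\mathcal E$ is the set of environments appearing in the training data. Zero-shot setting: at test time only covariate observations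 from a test environment $e^{\mathrm{tst}}\in\mathcal E$ are available, with distribution $Q^{\mathrm{tst}}_X:=\mathbb P^{e^{\mathrm{tst}}}_X$; $[e^{\mathrm{tst}}]:=\{e\in\mathcal E:\mathbb P^e_X=Q^{\mathrm{tst}}_X\}$. A baseline treatment $t_0\in\mathcal T$ is fixed; $\pi_t$ denotes the policy always selecting $t$. For $S\subseteq\{1,\dots,d\}$, $x^S$ is the subvector with coordinates in $S$, $\mathcal X^S$ the projection of $\mathcal X$. CATE: $\tau^S_e(x,t):=\mathbb E^{e,\pi_t}[Y\mid X^S=x]-\mathbb E^{e,\pi_{t_0}}[Y\mid X^S=x]$; $\tau_e:=\tau^{\{1,\dots,d\}}_e$. $S$ is e-invariant with respect to $\mathcal E^\diamond\subseteq\mathcal E$ if $\tau^S_{e_1}\equiv\tau^S_{e_2}$ for all $e_1,e_2\in\mathcal E^\diamond$; $\mathcal S^{\mathrm{e\text{-}inv}}_{\mathcal E^\diamond}$ is the collection of all such sets. For $S\in\mathcal S^{\mathrm{e\text{-}inv}}_{\mathcal E^{\mathrm{tr}}}$: $\Pi^S$ is the set of policies $\pi$ with $\pi(\cdot\mid x)=\bar\pi(\cdot\mid x^S)$ for some $\bar\pi:\mathcal X^S\to\Delta(\mathcal T)$; $\Pi^S_{\mathrm{opt}}$ is the set of $\pi^S\in\Pi^S$ such that $\pi^S(t\mid x)>0$ implies $t\in\operatorname*{argmax}_{t'\in\mathcal T}\frac{1}{|\mathcal E^{\mathrm{tr}}|}\sum_{e\in\mathcal E^{\mathrm{tr}}}\tau^S_e(x^S,t')$.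 Worst-case objective: $V^{[e^{\mathrm{tst}}]}(\pi):=\inf_{e\in[e^{\mathrm{tst}}]}\big(\mathbb E^{e,\pi}[Y]-\mathbb E^{e,\pi_{t_0}}[Y]\big)$. *)

theory Defs
  imports "HOL-Probability.Probability"
begin

text \<open>Environments are reals,
covariates x :: 'd => real (coordinates indexed by the finite type 'd, i.e. R^d),
hidden variables u :: 'p => real, treatments are the naturals 1..k.
Policies are functions pi x t = pi(t|x).\<close>

record ('d, 'p) model =
  nuX  :: "'d \<Rightarrow> real measure"
  nuU  :: "('p \<Rightarrow> real) measure"
  nuY  :: "real measure"
  dXU  :: "real \<Rightarrow> ('d \<Rightarrow> real) \<Rightarrow> ('p \<Rightarrow> real) \<Rightarrow> real"
  dY   :: "real \<Rightarrow> ('d \<Rightarrow> real) \<Rightarrow> ('p \<Rightarrow> real) \<Rightarrow> nat \<Rightarrow> real \<Rightarrow> real"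
  ntrt :: nat
  tbase :: nat
  Xsp  :: "('d \<Rightarrow> real) set"
  Usp  :: "('p \<Rightarrow> real) set"

definition Trt :: "('d, 'p) model \<Rightarrow> nat set" where
  "Trt M = {1..ntrt M}"

definition baseX :: "('d, 'p) model \<Rightarrow> ('d \<Rightarrow> real) measure" where
  "baseX M = PiM UNIV (nuX M)"

definition PXU :: "('d, 'p) model \<Rightarrow> real \<Rightarrow> (('d \<Rightarrow> real) \<times> ('p \<Rightarrow> real)) measure" where
  "PXU M e = density (baseX M \<Otimes>\<^sub>M nuU M) (\<lambda>xu. ennreal (dXU M e (fst xu) (snd xu)))"

definition PX :: "('d, 'p) model \<Rightarrow> real \<Rightarrow> ('d \<Rightarrow> real) measure" where
  "PX M e = distr (PXU M e) (baseX M) fst"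

definition PY :: "('d, 'p) model \<Rightarrow> real \<Rightarrow> ('d \<Rightarrow> real) \<Rightarrow> ('p \<Rightarrow> real) \<Rightarrow> nat \<Rightarrow> real measure" where
  "PY M e x u t = density (nuY M) (\<lambda>y. ennreal (dY M e x u t y))"

definition mY :: "('d, 'p) model \<Rightarrow> real \<Rightarrow> ('d \<Rightarrow> real) \<Rightarrow> ('p \<Rightarrow> real) \<Rightarrow> nat \<Rightarrow> real" where
  "mY M e x u t = (\<integral>y. y \<partial>PY M e x u t)"

definition EY :: "('d, 'p) model \<Rightarrow> real \<Rightarrow> (('d \<Rightarrow> real) \<Rightarrow> nat \<Rightarrow> real) \<Rightarrow> real" where
  "EY M e pol = (\<integral>xu. (\<Sum>t\<in>Trt M. pol (fst xu) t * mY M e (fst xu) (snd xu) t) \<partial>PXU M e)"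

definition const_pol :: "nat \<Rightarrow> ('d \<Rightarrow> real) \<Rightarrow> nat \<Rightarrow> real" where
  "const_pol t = (\<lambda>x s. if s = t then 1 else 0)"

definition mergeS :: "'d set \<Rightarrow> ('d \<Rightarrow> real) \<Rightarrow> ('d \<Rightarrow> real) \<Rightarrow> ('d \<Rightarrow> real)" where
  "mergeS S x z = (\<lambda>i. if i \<in> S then x i else z i)"

text \<open>E^{e,pi_t}[Y | X^S = x^S], via the ratio of (marginalised) densities;
  it depends on x only through its coordinates in S.\<close>
definition condY :: "('d, 'p) model \<Rightarrow> real \<Rightarrow> nat \<Rightarrow> 'd set \<Rightarrow> ('d \<Rightarrow> real) \<Rightarrow> real" where
  "condY M e t S x =
     (\<integral>z. (\<integral>u. mY M e (mergeS S x z) u t * dXU M e (mergeS S x z) u \<partial>nuU M) \<partial>PiM (UNIV - S) (nuX M))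
   / (\<integral>z. (\<integral>u. dXU M e (mergeS S x z) u \<partial>nuU M) \<partial>PiM (UNIV - S) (nuX M))"

definition tauS :: "('d, 'p) model \<Rightarrow> real \<Rightarrow> 'd set \<Rightarrow> ('d \<Rightarrow> real) \<Rightarrow> nat \<Rightarrow> real" where
  "tauS M e S x t = condY M e t S x - condY M e (tbase M) S x"

definition tau :: "('d, 'p) model \<Rightarrow> real \<Rightarrow> ('d \<Rightarrow> real) \<Rightarrow> nat \<Rightarrow> real" where
  "tau M e = tauS M e UNIV"

definition e_inv :: "('d, 'p) model \<Rightarrow> real set \<Rightarrow> 'd set \<Rightarrow> bool" where
  "e_inv M Ed S = (\<forall>e1\<in>Ed. \<forall>e2\<in>Ed. \<forall>x\<in>Xsp M. \<forall>t\<in>Trt M. tauS M e1 S x t = tauS M e2 S x t)"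

definition Einv :: "('d, 'p) model \<Rightarrow> real set \<Rightarrow> 'd set set" where
  "Einv M Ed = {S. e_inv M Ed S}"

definition is_policy :: "('d, 'p) model \<Rightarrow> (('d \<Rightarrow> real) \<Rightarrow> nat \<Rightarrow> real) \<Rightarrow> bool" where
  "is_policy M pol =
     ((\<forall>t. (\<lambda>x. pol x t) \<in> borel_measurable (baseX M)) \<and>
      (\<forall>x\<in>Xsp M. (\<forall>t\<in>Trt M. 0 \<le> pol x t) \<and> (\<Sum>t\<in>Trt M. pol x t) = 1))"

definition PiS :: "('d, 'p) model \<Rightarrow> 'd set \<Rightarrow> (('d \<Rightarrow> real) \<Rightarrow> nat \<Rightarrow> real) \<Rightarrow> bool" where
  "PiS M S pol = (is_policy M pol \<and>
     (\<exists>pb. \<forall>x\<in>Xsp M. \<forall>t\<in>Trt M. pol x t = pb (restrict x S) t))"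

definition PiS_opt :: "('d, 'p) model \<Rightarrow> real set \<Rightarrow> 'd set \<Rightarrow> (('d \<Rightarrow> real) \<Rightarrow> nat \<Rightarrow> real) \<Rightarrow> bool" where
  "PiS_opt M Etr S pol = (PiS M S pol \<and>
     (\<forall>x\<in>Xsp M. \<forall>t\<in>Trt M. pol x t > 0 \<longrightarrow>
        (\<forall>t'\<in>Trt M. (1 / real (card Etr)) * (\<Sum>e\<in>Etr. tauS M e S x t')
                    \<le> (1 / real (card Etr)) * (\<Sum>e\<in>Etr. tauS M e S x t))))"

definition eq_class :: "('d, 'p) model \<Rightarrow> real set \<Rightarrow> real \<Rightarrow> real set" where
  "eq_class M E etst = {e \<in> E. PX M e = PX M etst}"

text \<open>Worst-case objective (extended real, the infimum may be -infinity).\<close>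
definition Vworst :: "('d, 'p) model \<Rightarrow> real set \<Rightarrow> real \<Rightarrow> (('d \<Rightarrow> real) \<Rightarrow> nat \<Rightarrow> real) \<Rightarrow> ereal" where
  "Vworst M E etst pol =
     (INF e\<in>eq_class M E etst. ereal (EY M e pol - EY M e (const_pol (tbase M))))"

definition model_ok :: "('d, 'p) model \<Rightarrow> real set \<Rightarrow> bool" where
  "model_ok M E =
    (ntrt M \<ge> 1 \<and> tbase M \<in> Trt M \<and>
     (\<forall>i. sigma_finite_measure (nuX M i) \<and> sets (nuX M i) = sets borel) \<and>
     sigma_finite_measure (nuU M) \<and> sigma_finite_measure (nuY M) \<and>
     (\<forall>e\<in>E.
        (\<lambda>xu. dXU M e (fst xu) (snd xu)) \<in> borel_measurable (baseX M \<Otimes>\<^sub>M nuU M) \<and>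
        (\<forall>x u. 0 \<le> dXU M e x u) \<and>
        prob_space (PXU M e) \<and>
        (AE xu in PXU M e. fst xu \<in> Xsp M \<and> snd xu \<in> Usp M) \<and>
        (\<forall>A\<in>sets (PX M e). open A \<and> A \<inter> Xsp M \<noteq> {} \<longrightarrow> emeasure (PX M e) A > 0) \<and>
        (\<forall>t\<in>Trt M.
           (\<lambda>p. dY M e (fst (fst p)) (snd (fst p)) t (snd p))
               \<in> borel_measurable ((baseX M \<Otimes>\<^sub>M nuU M) \<Otimes>\<^sub>M nuY M) \<and>
           (\<forall>x u y. 0 \<le> dY M e x u t y) \<and>
           (\<forall>x u. prob_space (PY M e x u t)) \<and>
           (AE xu in PXU M e. integrable (PY M e (fst xu) (snd xu) t) (\<lambda>y. y)) \<and>
           integrable (PXU M e) (\<lambda>xu. \<integral>y. \<bar>y\<bar> \<partial>PY M e (fst xu) (snd xu) t))))"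

end

theory Submission
  imports Defs
begin


lemma core_tower:
  fixes A :: "'a measure" and C :: "'c measure" and U :: "'u measure"
    and F Mm :: "('a \<times> 'c) \<times> 'u \<Rightarrow> real" and G :: "'a \<times> 'c \<Rightarrow> real" and cc :: "'a \<Rightarrow> real"
    and Pg :: "'a \<times> 'c \<Rightarrow> bool"
  assumes sfA: "sigma_finite_measure A" and sfC: "sigma_finite_measure C" and sfU: "sigma_finite_measure U"
    and Fm[measurable]: "F \<in> borel_measurable ((A \<Otimes>\<^sub>M C) \<Otimes>\<^sub>M U)"
    and Mmm[measurable]: "Mm \<in> borel_measurable ((A \<Otimes>\<^sub>M C) \<Otimes>\<^sub>M U)"
    and Fnn: "\<And>p. 0 \<le> F p"
    and intMF: "integrable ((A \<Otimes>\<^sub>M C) \<Otimes>\<^sub>M U) (\<lambda>p. Mm p * F p)"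
    and intF: "integrable ((A \<Otimes>\<^sub>M C) \<Otimes>\<^sub>M U) F"
    and Gm[measurable]: "G \<in> borel_measurable (A \<Otimes>\<^sub>M C)"
    and Gb: "\<And>p. \<bar>G p\<bar> \<le> 1"
    and ccm[measurable]: "cc \<in> borel_measurable A"
    and cc_eq: "\<And>a. a \<in> space A \<Longrightarrow> cc a =
        (\<integral>z. (\<integral>u. Mm ((a,z),u) * F ((a,z),u) \<partial>U) \<partial>C) / (\<integral>z. (\<integral>u. F ((a,z),u) \<partial>U) \<partial>C)"
    and good: "AE p in A \<Otimes>\<^sub>M C. AE u in U. F (p,u) \<noteq> 0 \<longrightarrow> Pg p"
    and Pg_const: "\<And>a z z'. Pg (a,z) \<Longrightarrow> Pg (a,z') \<Longrightarrow> G (a,z) = G (a,z')"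
  shows "integrable ((A \<Otimes>\<^sub>M C) \<Otimes>\<^sub>M U) (\<lambda>p. F p * (G (fst p) * cc (fst (fst p))))"
    and "(\<integral>p. F p * (G (fst p) * Mm p) \<partial>((A \<Otimes>\<^sub>M C) \<Otimes>\<^sub>M U))
         = (\<integral>p. F p * (G (fst p) * cc (fst (fst p))) \<partial>((A \<Otimes>\<^sub>M C) \<Otimes>\<^sub>M U))"
proof -
  interpret A: sigma_finite_measure A by (rule sfA)
  interpret C: sigma_finite_measure C by (rule sfC)
  interpret U: sigma_finite_measure U by (rule sfU)
  interpret AC: pair_sigma_finite A C ..
  interpret ACU: pair_sigma_finite "A \<Otimes>\<^sub>M C" U ..
  define n where "n p = (\<integral>u. Mm (p,u) * F (p,u) \<partial>U)" for p
  define d where "d p = (\<integral>u. F (p,u) \<partial>U)" for p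
  define N where "N a = (\<integral>z. n (a,z) \<partial>C)" for a
  define D where "D a = (\<integral>z. d (a,z) \<partial>C)" for a
  have nm[measurable]: "n \<in> borel_measurable (A \<Otimes>\<^sub>M C)" unfolding n_def by measurable
  have dm[measurable]: "d \<in> borel_measurable (A \<Otimes>\<^sub>M C)" unfolding d_def by measurable
  have intn: "integrable (A \<Otimes>\<^sub>M C) n"
    using ACU.integrable_fst'[OF intMF] unfolding n_def by simp
  have intd: "integrable (A \<Otimes>\<^sub>M C) d"
    using ACU.integrable_fst'[OF intF] unfolding d_def by simp
  have aeU: "AE p in A \<Otimes>\<^sub>M C. integrable U (\<lambda>u. Mm (p,u) * F (p,u)) \<and> integrable U (\<lambda>u. F (p,u))"
    using ACU.AE_integrable_fst'[OF intMF] ACU.AE_integrable_fst'[OF intF] by eventually_elim auto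
  have aeC: "AE a in A. integrable C (\<lambda>z. n (a,z)) \<and> integrable C (\<lambda>z. d (a,z))"
    using AC.AE_integrable_fst'[OF intn] AC.AE_integrable_fst'[OF intd] by eventually_elim auto
  have ae2: "AE a in A. AE z in C. (integrable U (\<lambda>u. Mm ((a,z),u) * F ((a,z),u)) \<and> integrable U (\<lambda>u. F ((a,z),u)))
        \<and> (AE u in U. F ((a,z),u) \<noteq> 0 \<longrightarrow> Pg (a,z))"
    using AC.AE_pair[OF AE_conjI[OF aeU good]] by simp
  have dnn: "0 \<le> d p" for p unfolding d_def using Fnn by (simp add: integral_nonneg)
  have Fint0: "AE u in U. F (p,u) = 0"
    if "integrable U (\<lambda>u. F (p,u))" "d p = 0" for p
    using integral_nonneg_eq_0_iff_AE[OF that(1)] that(2) Fnn unfolding d_def by simp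
  have Dzero: "AE a in A. D a = 0 \<longrightarrow> N a = 0"
    using aeC ae2
  proof eventually_elim
    case (elim a)
    show ?case
    proof
      assume "D a = 0"
      then have "AE z in C. d (a,z) = 0"
        using integral_nonneg_eq_0_iff_AE[of C "\<lambda>z. d (a,z)"] elim(1) dnn unfolding D_def by simp
      with elim(2) have "AE z in C. n (a,z) = 0"
      proof eventually_elim
        case (elim z)
        then have "AE u in U. F ((a,z),u) = 0" using Fint0 by blast
        then have "AE u in U. Mm ((a,z),u) * F ((a,z),u) = 0" by eventually_elim simp
        then show ?case unfolding n_def by (rule integral_eq_zero_AE)
      qed
      then show "N a = 0" unfolding N_def by (rule integral_eq_zero_AE)
    qed
  qed
  have key: "AE a in A. (\<integral>z. G (a,z) * n (a,z) \<partial>C) = (\<integral>z. G (a,z) * cc a * d (a,z) \<partial>C)"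
    using aeC ae2 Dzero AE_space
  proof eventually_elim
    case (elim a)
    define \<gamma> where "\<gamma> = (if \<exists>z. Pg (a,z) then G (a, SOME z. Pg (a,z)) else 0)"
    have "AE z in C. G (a,z) * n (a,z) = \<gamma> * n (a,z) \<and> G (a,z) * d (a,z) = \<gamma> * d (a,z)"
      using elim(2)
    proof eventually_elim
      case (elim z)
      show ?case
      proof (cases "Pg (a,z)")
        case True
        then have "\<exists>z. Pg (a,z)" by blast
        then have "Pg (a, SOME z. Pg (a,z))" by (rule someI_ex)
        then have "G (a,z) = G (a, SOME z. Pg (a,z))" by (rule Pg_const[OF True])
        with \<open>\<exists>z. Pg (a,z)\<close> have "G (a,z) = \<gamma>" unfolding \<gamma>_def by simp
        then show ?thesis by simp
      next
        case False
        from elim have "AE u in U. F ((a,z),u) \<noteq> 0 \<longrightarrow> Pg (a,z)" by blast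
        then have "AE u in U. F ((a,z),u) = 0" by eventually_elim (use False in blast)
        moreover from this have "AE u in U. Mm ((a,z),u) * F ((a,z),u) = 0" by eventually_elim simp
        ultimately have "n (a,z) = 0" "d (a,z) = 0" unfolding n_def d_def
          by (auto intro: integral_eq_zero_AE)
        then show ?thesis by simp
      qed
    qed
    then have ae1: "AE z in C. G (a,z) * n (a,z) = \<gamma> * n (a,z)"
      and ae2': "AE z in C. G (a,z) * d (a,z) = \<gamma> * d (a,z)" by auto
    have "(\<integral>z. G (a,z) * n (a,z) \<partial>C) = (\<integral>z. \<gamma> * n (a,z) \<partial>C)"
      by (rule integral_cong_AE) (use ae1 elim(4) in simp_all)
    then have e1: "(\<integral>z. G (a,z) * n (a,z) \<partial>C) = \<gamma> * N a" unfolding N_def by simp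
    have "(\<integral>z. G (a,z) * d (a,z) \<partial>C) = (\<integral>z. \<gamma> * d (a,z) \<partial>C)"
      by (rule integral_cong_AE) (use ae2' elim(4) in simp_all)
    then have e2: "(\<integral>z. G (a,z) * d (a,z) \<partial>C) = \<gamma> * D a" unfolding D_def by simp
    have "(\<integral>z. G (a,z) * cc a * d (a,z) \<partial>C) = cc a * (\<integral>z. G (a,z) * d (a,z) \<partial>C)"
      by (simp add: ac_simps)
    also have "\<dots> = cc a * \<gamma> * D a" using e2 by simp
    also have "\<dots> = \<gamma> * N a"
    proof (cases "D a = 0")
      case True with elim(3) show ?thesis by simp
    next
      case False
      have "cc a = N a / D a" using cc_eq[OF elim(4)] unfolding N_def D_def n_def d_def by simp
      with False show ?thesis by simp
    qed
    finally show ?case using e1 by simp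
  qed
  have ccd_eq: "AE a in A. ennreal (\<bar>cc a\<bar> * D a) = ennreal \<bar>N a\<bar>"
    using Dzero AE_space
  proof eventually_elim
    case (elim a)
    have Dnn: "0 \<le> D a" unfolding D_def using dnn by (simp add: integral_nonneg)
    show ?case
    proof (cases "D a = 0")
      case True with elim show ?thesis by simp
    next
      case False
      have "cc a = N a / D a" using cc_eq[OF elim(2)] unfolding N_def D_def n_def d_def by simp
      with False Dnn show ?thesis by (simp add: abs_mult)
    qed
  qed
  have int_rhs: "integrable ((A \<Otimes>\<^sub>M C) \<Otimes>\<^sub>M U) (\<lambda>p. F p * (G (fst p) * cc (fst (fst p))))"
    unfolding integrable_iff_bounded
  proof
    show "(\<lambda>p. F p * (G (fst p) * cc (fst (fst p)))) \<in> borel_measurable ((A \<Otimes>\<^sub>M C) \<Otimes>\<^sub>M U)" by measurable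
    have "(\<integral>\<^sup>+p. ennreal (norm ((F p * (G (fst p) * cc (fst (fst p)))))) \<partial>((A \<Otimes>\<^sub>M C) \<Otimes>\<^sub>M U))
        \<le> (\<integral>\<^sup>+p. ennreal (F p * \<bar>cc (fst (fst p))\<bar>) \<partial>((A \<Otimes>\<^sub>M C) \<Otimes>\<^sub>M U))"
    proof (rule nn_integral_mono)
      fix p :: "('a \<times> 'c) \<times> 'u"
      have "\<bar>G (fst p)\<bar> * \<bar>cc (fst (fst p))\<bar> \<le> 1 * \<bar>cc (fst (fst p))\<bar>"
        by (rule mult_right_mono) (use Gb in auto)
      then have "F p * (\<bar>G (fst p)\<bar> * \<bar>cc (fst (fst p))\<bar>) \<le> F p * \<bar>cc (fst (fst p))\<bar>"
        using Fnn[of p] by (simp add: mult_left_mono)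
      then show "ennreal (norm ((F p * (G (fst p) * cc (fst (fst p)))))) \<le> ennreal (F p * \<bar>cc (fst (fst p))\<bar>)"
        using Fnn[of p] by (simp add: abs_mult)
    qed
    also have "\<dots> = (\<integral>\<^sup>+p. \<integral>\<^sup>+u. ennreal (F (p,u) * \<bar>cc (fst p)\<bar>) \<partial>U \<partial>(A \<Otimes>\<^sub>M C))"
    proof -
      have m: "(\<lambda>p. ennreal (F p * \<bar>cc (fst (fst p))\<bar>)) \<in> borel_measurable ((A \<Otimes>\<^sub>M C) \<Otimes>\<^sub>M U)"
        by measurable
      show ?thesis using U.nn_integral_fst[OF m] by simp
    qed
    also have "\<dots> = (\<integral>\<^sup>+p. ennreal \<bar>cc (fst p)\<bar> * \<integral>\<^sup>+u. ennreal (F (p,u)) \<partial>U \<partial>(A \<Otimes>\<^sub>M C))"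
      by (rule nn_integral_cong, subst nn_integral_cmult[symmetric])
         (auto simp: ennreal_mult' Fnn mult.commute intro!: nn_integral_cong)
    also have "\<dots> = (\<integral>\<^sup>+p. ennreal (\<bar>cc (fst p)\<bar> * d p) \<partial>(A \<Otimes>\<^sub>M C))"
      using aeU
    proof (intro nn_integral_cong_AE, eventually_elim)
      case (elim p)
      then have "(\<integral>\<^sup>+u. ennreal (F (p,u)) \<partial>U) = ennreal (d p)"
        unfolding d_def by (intro nn_integral_eq_integral) (auto simp: Fnn)
      then show ?case by (simp add: ennreal_mult dnn)
    qed
    also have "\<dots> = (\<integral>\<^sup>+a. \<integral>\<^sup>+z. ennreal (\<bar>cc a\<bar> * d (a,z)) \<partial>C \<partial>A)"
    proof -
      have m: "(\<lambda>p. ennreal (\<bar>cc (fst p)\<bar> * d p)) \<in> borel_measurable (A \<Otimes>\<^sub>M C)"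
        by measurable
      show ?thesis using C.nn_integral_fst[OF m] by simp
    qed
    also have "\<dots> = (\<integral>\<^sup>+a. ennreal (\<bar>cc a\<bar> * D a) \<partial>A)"
      using aeC
    proof (intro nn_integral_cong_AE, eventually_elim)
      case (elim a)
      have "(\<integral>\<^sup>+z. ennreal (\<bar>cc a\<bar> * d (a,z)) \<partial>C) = ennreal \<bar>cc a\<bar> * (\<integral>\<^sup>+z. ennreal (d (a,z)) \<partial>C)"
        using elim by (subst nn_integral_cmult[symmetric]) (auto simp: ennreal_mult dnn intro: borel_measurable_integrable)
      also have "(\<integral>\<^sup>+z. ennreal (d (a,z)) \<partial>C) = ennreal (D a)"
        unfolding D_def using elim by (intro nn_integral_eq_integral) (auto simp: dnn)
      finally show ?case by (simp add: ennreal_mult D_def dnn integral_nonneg)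
    qed
    also have "\<dots> = (\<integral>\<^sup>+a. ennreal \<bar>N a\<bar> \<partial>A)"
      by (rule nn_integral_cong_AE) (rule ccd_eq)
    also have "\<dots> \<le> (\<integral>\<^sup>+a. \<integral>\<^sup>+z. ennreal (norm (n (a,z))) \<partial>C \<partial>A)"
      using aeC
    proof (intro nn_integral_mono_AE, eventually_elim)
      case (elim a)
      then show ?case unfolding N_def using integral_norm_bound_ennreal[of C "\<lambda>z. n (a,z)"] by simp
    qed
    also have "\<dots> = (\<integral>\<^sup>+p. ennreal (norm (n p)) \<partial>(A \<Otimes>\<^sub>M C))"
    proof -
      have m: "(\<lambda>p. ennreal (norm (n p))) \<in> borel_measurable (A \<Otimes>\<^sub>M C)"
        by measurable
      show ?thesis using C.nn_integral_fst[OF m] by simp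
    qed
    also have "\<dots> < \<infinity>" using intn unfolding integrable_iff_bounded by simp
    finally show "(\<integral>\<^sup>+p. ennreal (norm ((F p * (G (fst p) * cc (fst (fst p)))))) \<partial>((A \<Otimes>\<^sub>M C) \<Otimes>\<^sub>M U)) < \<infinity>" .
  qed
  show "integrable ((A \<Otimes>\<^sub>M C) \<Otimes>\<^sub>M U) (\<lambda>p. F p * (G (fst p) * cc (fst (fst p))))" by (rule int_rhs)
  have intL: "integrable ((A \<Otimes>\<^sub>M C) \<Otimes>\<^sub>M U) (\<lambda>p. F p * (G (fst p) * Mm p))"
  proof (rule Bochner_Integration.integrable_bound[OF intMF])
    show "(\<lambda>p. F p * (G (fst p) * Mm p)) \<in> borel_measurable ((A \<Otimes>\<^sub>M C) \<Otimes>\<^sub>M U)" by measurable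
    show "AE p in (A \<Otimes>\<^sub>M C) \<Otimes>\<^sub>M U. norm (F p * (G (fst p) * Mm p)) \<le> norm (Mm p * F p)"
    proof (rule AE_I2)
      fix p :: "('a \<times> 'c) \<times> 'u"
      have "\<bar>G (fst p)\<bar> * (\<bar>Mm p\<bar> * F p) \<le> 1 * (\<bar>Mm p\<bar> * F p)"
        by (rule mult_right_mono) (use Gb Fnn in auto)
      then show "norm (F p * (G (fst p) * Mm p)) \<le> norm (Mm p * F p)"
        using Fnn[of p] by (simp add: abs_mult ac_simps)
    qed
  qed
  have intGn: "integrable (A \<Otimes>\<^sub>M C) (\<lambda>p. G p * n p)"
  proof (rule Bochner_Integration.integrable_bound[OF intn])
    show "(\<lambda>p. G p * n p) \<in> borel_measurable (A \<Otimes>\<^sub>M C)" by measurable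
    show "AE p in A \<Otimes>\<^sub>M C. norm (G p * n p) \<le> norm (n p)"
    proof (rule AE_I2)
      fix p :: "'a \<times> 'c"
      have "\<bar>G p\<bar> * \<bar>n p\<bar> \<le> 1 * \<bar>n p\<bar>"
        by (rule mult_right_mono) (use Gb in auto)
      then show "norm (G p * n p) \<le> norm (n p)" by (simp add: abs_mult)
    qed
  qed
  have eqR: "(\<integral>u. F (p,u) * (G p * cc (fst p)) \<partial>U) = G p * cc (fst p) * d p" for p
    unfolding d_def by (simp add: ac_simps)
  have eqL: "(\<integral>u. F (p,u) * (G p * Mm (p,u)) \<partial>U) = G p * n p" for p
  proof -
    have "(\<integral>u. F (p,u) * (G p * Mm (p,u)) \<partial>U) = (\<integral>u. G p * (Mm (p,u) * F (p,u)) \<partial>U)"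
      by (simp add: ac_simps)
    also have "\<dots> = G p * n p" unfolding n_def by simp
    finally show ?thesis .
  qed
  have intGcd: "integrable (A \<Otimes>\<^sub>M C) (\<lambda>p. G p * cc (fst p) * d p)"
  proof -
    have "(\<lambda>p. G p * cc (fst p) * d p) = (\<lambda>x. (\<integral>y. F (x,y) \<partial>U) * (G x * cc (fst x)))"
      unfolding d_def by (simp add: fun_eq_iff)
    then show ?thesis using ACU.integrable_fst'[OF int_rhs] by simp
  qed
  have m1: "(\<lambda>a. \<integral>z. G (a,z) * n (a,z) \<partial>C) \<in> borel_measurable A" by measurable
  have m2: "(\<lambda>a. \<integral>z. G (a,z) * cc a * d (a,z) \<partial>C) \<in> borel_measurable A" by measurable
  have "(\<integral>p. F p * (G (fst p) * Mm p) \<partial>((A \<Otimes>\<^sub>M C) \<Otimes>\<^sub>M U))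
      = (\<integral>p. (\<integral>u. F (p,u) * (G p * Mm (p,u)) \<partial>U) \<partial>(A \<Otimes>\<^sub>M C))"
    using ACU.integral_fst'[OF intL] by simp
  also have "\<dots> = (\<integral>p. G p * n p \<partial>(A \<Otimes>\<^sub>M C))" by (simp add: eqL)
  also have "\<dots> = (\<integral>a. (\<integral>z. G (a,z) * n (a,z) \<partial>C) \<partial>A)"
    using AC.integral_fst'[OF intGn] by simp
  also have "\<dots> = (\<integral>a. (\<integral>z. G (a,z) * cc a * d (a,z) \<partial>C) \<partial>A)"
    by (rule integral_cong_AE[OF m1 m2 key])
  also have "\<dots> = (\<integral>p. G p * cc (fst p) * d p \<partial>(A \<Otimes>\<^sub>M C))"
    using AC.integral_fst'[OF intGcd] by simp
  also have "\<dots> = (\<integral>p. (\<integral>u. F (p,u) * (G p * cc (fst p)) \<partial>U) \<partial>(A \<Otimes>\<^sub>M C))"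
    by (rule Bochner_Integration.integral_cong[OF refl]) (rule eqR[symmetric])
  also have "\<dots> = (\<integral>p. F p * (G (fst p) * cc (fst (fst p))) \<partial>((A \<Otimes>\<^sub>M C) \<Otimes>\<^sub>M U))"
    using ACU.integral_fst'[OF int_rhs] by simp
  finally show "(\<integral>p. F p * (G (fst p) * Mm p) \<partial>((A \<Otimes>\<^sub>M C) \<Otimes>\<^sub>M U))
         = (\<integral>p. F p * (G (fst p) * cc (fst (fst p))) \<partial>((A \<Otimes>\<^sub>M C) \<Otimes>\<^sub>M U))" .
qed


lemma mergeS_merge: "mergeS S a z = merge S (UNIV - S) (a, z)"
  by (auto simp: mergeS_def merge_def fun_eq_iff)

lemma condY_cong:
  assumes "\<forall>i\<in>S. x i = x' i" shows "condY M e t S x = condY M e t S x'"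
proof -
  have "mergeS S x z = mergeS S x' z" for z using assms by (auto simp: mergeS_def fun_eq_iff)
  then show ?thesis by (simp add: condY_def)
qed

lemma sets_nuX: "model_ok M E \<Longrightarrow> sets (nuX M i) = sets borel"
  unfolding model_ok_def by auto

lemma space_nuX: "model_ok M E \<Longrightarrow> space (nuX M i) = UNIV"
  using sets_eq_imp_space_eq[OF sets_nuX] by simp

lemma space_baseX: "model_ok M E \<Longrightarrow> space (baseX M) = UNIV"
  by (simp add: baseX_def space_PiM space_nuX)

lemma psf: "model_ok M E \<Longrightarrow> product_sigma_finite (nuX M)"
  unfolding model_ok_def product_sigma_finite_def by auto

lemma sf_PiM: "model_ok M E \<Longrightarrow> sigma_finite_measure (PiM I (nuX M :: 'd::finite \<Rightarrow> real measure))"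
  by (rule product_sigma_finite.sigma_finite[OF psf]) auto

lemma sf_U: "model_ok M E \<Longrightarrow> sigma_finite_measure (nuU M)"
  unfolding model_ok_def by auto

lemma sf_Y: "model_ok M E \<Longrightarrow> sigma_finite_measure (nuY M)"
  unfolding model_ok_def by auto

lemma meas_coord_nuX:
  assumes "model_ok M E" "(\<lambda>x. f x) \<in> borel_measurable K"
  shows "f \<in> measurable K (nuX M i)"
  by (subst measurable_cong_sets[OF refl sets_nuX[OF assms(1)]]) (rule assms(2))

lemma meas_mergeS:
  fixes M :: "('d::finite, 'p) model" and K :: "('d \<Rightarrow> real) measure"
  assumes model: "model_ok M E" and K: "\<forall>i\<in>S. (\<lambda>x. x i) \<in> borel_measurable K"
  shows "(\<lambda>(x,z). mergeS S x z) \<in> measurable (K \<Otimes>\<^sub>M PiM (UNIV - S) (nuX M)) (baseX M)"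
proof -
  have "(\<lambda>\<omega> i. (\<lambda>p. if i \<in> S then fst p i else snd p i) \<omega>)
      \<in> measurable (K \<Otimes>\<^sub>M PiM (UNIV - S) (nuX M)) (PiM UNIV (nuX M))"
  proof (rule measurable_PiM_single')
    fix i :: 'd
    show "(\<lambda>p. if i \<in> S then fst p i else snd p i) \<in> measurable (K \<Otimes>\<^sub>M PiM (UNIV - S) (nuX M)) (nuX M i)"
    proof (cases "i \<in> S")
      case True
      have "(\<lambda>p. fst p i) \<in> borel_measurable (K \<Otimes>\<^sub>M PiM (UNIV - S) (nuX M))"
        using measurable_compose[OF measurable_fst[of K "PiM (UNIV - S) (nuX M)"] K[rule_format, OF True]]
        by simp
      with True show ?thesis using meas_coord_nuX[OF model] by simp
    next
      case False
      have "(\<lambda>p. snd p i) \<in> measurable (K \<Otimes>\<^sub>M PiM (UNIV - S) (nuX M)) (nuX M i)"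
        using measurable_compose[OF measurable_snd measurable_component_singleton[of i "UNIV - S" "nuX M"]] False
        by (simp add: comp_def)
      with False show ?thesis by simp
    qed
  next
    show "(\<lambda>\<omega> i. if i \<in> S then fst \<omega> i else snd \<omega> i) \<in> space (K \<Otimes>\<^sub>M PiM (UNIV - S) (nuX M)) \<rightarrow> (\<Pi>\<^sub>E i\<in>UNIV. space (nuX M i))"
      by (simp add: space_nuX[OF model])
  qed
  moreover have "(\<lambda>\<omega> i. (\<lambda>p. if i \<in> S then fst p i else snd p i) \<omega>) = (\<lambda>(x,z). mergeS S x z)"
    by (auto simp: mergeS_def fun_eq_iff)
  ultimately show ?thesis by (simp add: baseX_def)
qed

lemma prob_AE_ex: "prob_space N \<Longrightarrow> (AE x in N. P x) \<Longrightarrow> \<exists>x. P x"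
proof (rule ccontr)
  assume "prob_space N" "AE x in N. P x" "\<not> (\<exists>x. P x)"
  then have "AE x in N. False" by simp
  with prob_space.AE_False[OF \<open>prob_space N\<close>] show False by simp
qed

lemma meas_id_nuY:
  assumes model: "model_ok M E" and e: "e \<in> E" and t: "t \<in> Trt M"
  shows "(\<lambda>y. y) \<in> borel_measurable (nuY M)"
proof -
  have "prob_space (PXU M e)" "AE xu in PXU M e. integrable (PY M e (fst xu) (snd xu) t) (\<lambda>y. y)"
    using model e t unfolding model_ok_def by auto
  from prob_AE_ex[OF this] obtain xu where "integrable (PY M e (fst xu) (snd xu) t) (\<lambda>y. y)" by blast
  then have "(\<lambda>y. y) \<in> borel_measurable (PY M e (fst xu) (snd xu) t)" by auto
  then show ?thesis unfolding PY_def by simp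
qed

lemma meas_mY:
  assumes model: "model_ok M E" and e: "e \<in> E" and t: "t \<in> Trt M"
  shows "(\<lambda>xu. mY M e (fst xu) (snd xu) t) \<in> borel_measurable (baseX M \<Otimes>\<^sub>M nuU M)"
proof -
  interpret Y: sigma_finite_measure "nuY M" by (rule sf_Y[OF model])
  have dm: "(\<lambda>p. dY M e (fst (fst p)) (snd (fst p)) t (snd p)) \<in> borel_measurable ((baseX M \<Otimes>\<^sub>M nuU M) \<Otimes>\<^sub>M nuY M)"
    and dnn: "\<And>x u y. 0 \<le> dY M e x u t y"
    using model e t unfolding model_ok_def by auto
  have eq: "mY M e x u t = (\<integral>y. dY M e x u t y * y \<partial>nuY M)" if u: "u \<in> space (nuU M)" for x u
  proof -
    have m1: "(\<lambda>y. dY M e x u t y) \<in> borel_measurable (nuY M)"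
      using measurable_Pair2[OF dm, of "(x,u)"] u by (simp add: space_pair_measure space_baseX[OF model])
    show ?thesis unfolding mY_def PY_def
      by (subst integral_density) (auto simp: m1 dnn meas_id_nuY[OF model e t])
  qed
  have "(\<lambda>xu. \<integral>y. dY M e (fst xu) (snd xu) t y * y \<partial>nuY M) \<in> borel_measurable (baseX M \<Otimes>\<^sub>M nuU M)"
  proof (rule Y.borel_measurable_lebesgue_integral)
    show "(\<lambda>(xu, y). dY M e (fst xu) (snd xu) t y * y) \<in> borel_measurable ((baseX M \<Otimes>\<^sub>M nuU M) \<Otimes>\<^sub>M nuY M)"
    proof -
      have sm: "(\<lambda>p. snd p) \<in> borel_measurable ((baseX M \<Otimes>\<^sub>M nuU M) \<Otimes>\<^sub>M nuY M)"
        using measurable_compose[OF measurable_snd[of "baseX M \<Otimes>\<^sub>M nuU M" "nuY M"] meas_id_nuY[OF model e t]] by simp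
      show ?thesis using dm sm by (auto simp: split_beta' intro!: borel_measurable_times)
    qed
  qed
  then show ?thesis
    by (rule measurable_cong[THEN iffD1, rotated]) (auto simp: space_pair_measure eq)
qed
lemma meas_dXU:
  assumes model: "model_ok M E" and e: "e \<in> E"
  shows "(\<lambda>xu. dXU M e (fst xu) (snd xu)) \<in> borel_measurable (baseX M \<Otimes>\<^sub>M nuU M)"
  using model e unfolding model_ok_def by auto

lemma meas_condY:
  fixes M :: "('d::finite, 'p) model" and K :: "('d \<Rightarrow> real) measure"
  assumes model: "model_ok M E" and e: "e \<in> E" and t: "t \<in> Trt M"
    and K: "\<forall>i\<in>S. (\<lambda>x. x i) \<in> borel_measurable K"
  shows "(\<lambda>x. condY M e t S x) \<in> borel_measurable K"
proof -
  let ?C = "PiM (UNIV - S) (nuX M)"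
  let ?U = "nuU M"
  interpret C: sigma_finite_measure ?C by (rule sf_PiM[OF model])
  interpret U: sigma_finite_measure ?U by (rule sf_U[OF model])
  have mg: "(\<lambda>(x,z). mergeS S x z) \<in> measurable (K \<Otimes>\<^sub>M ?C) (baseX M)" by (rule meas_mergeS[OF model K])
  have T: "(\<lambda>p. (mergeS S (fst (fst p)) (snd (fst p)), snd p)) \<in> measurable ((K \<Otimes>\<^sub>M ?C) \<Otimes>\<^sub>M ?U) (baseX M \<Otimes>\<^sub>M ?U)"
  proof (rule measurable_Pair)
    show "(\<lambda>p. mergeS S (fst (fst p)) (snd (fst p))) \<in> measurable ((K \<Otimes>\<^sub>M ?C) \<Otimes>\<^sub>M ?U) (baseX M)"
      using measurable_compose[OF measurable_fst[of "K \<Otimes>\<^sub>M ?C" ?U] mg] by (simp add: split_beta')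
  qed simp
  have f1: "(\<lambda>p. dXU M e (mergeS S (fst (fst p)) (snd (fst p))) (snd p)) \<in> borel_measurable ((K \<Otimes>\<^sub>M ?C) \<Otimes>\<^sub>M ?U)"
    using measurable_compose[OF T meas_dXU[OF model e]] by simp
  have m1: "(\<lambda>p. mY M e (mergeS S (fst (fst p)) (snd (fst p))) (snd p) t) \<in> borel_measurable ((K \<Otimes>\<^sub>M ?C) \<Otimes>\<^sub>M ?U)"
    using measurable_compose[OF T meas_mY[OF model e t]] by simp
  have "(\<lambda>p. \<integral>u. mY M e (mergeS S (fst p) (snd p)) u t * dXU M e (mergeS S (fst p) (snd p)) u \<partial>?U) \<in> borel_measurable (K \<Otimes>\<^sub>M ?C)"
    by (rule U.borel_measurable_lebesgue_integral) (use f1 m1 in \<open>auto simp: split_beta' intro!: borel_measurable_times\<close>)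
  then have n: "(\<lambda>x. \<integral>z. \<integral>u. mY M e (mergeS S x z) u t * dXU M e (mergeS S x z) u \<partial>?U \<partial>?C) \<in> borel_measurable K"
    by (intro C.borel_measurable_lebesgue_integral) (simp add: split_beta')
  have "(\<lambda>p. \<integral>u. dXU M e (mergeS S (fst p) (snd p)) u \<partial>?U) \<in> borel_measurable (K \<Otimes>\<^sub>M ?C)"
    by (rule U.borel_measurable_lebesgue_integral) (use f1 in \<open>auto simp: split_beta'\<close>)
  then have d: "(\<lambda>x. \<integral>z. \<integral>u. dXU M e (mergeS S x z) u \<partial>?U \<partial>?C) \<in> borel_measurable K"
    by (intro C.borel_measurable_lebesgue_integral) (simp add: split_beta')
  show ?thesis unfolding condY_def using n d by (rule borel_measurable_divide)
qed

lemma tower: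
  fixes M :: "('d::finite, 'p) model" and g :: "('d \<Rightarrow> real) \<Rightarrow> real"
  assumes model: "model_ok M E" and e: "e \<in> E" and t: "t \<in> Trt M"
    and gm[measurable]: "g \<in> borel_measurable (baseX M)" and gb: "\<And>x. \<bar>g x\<bar> \<le> 1"
    and gS: "\<And>x x'. x \<in> Xsp M \<Longrightarrow> x' \<in> Xsp M \<Longrightarrow> (\<forall>i\<in>S. x i = x' i) \<Longrightarrow> g x = g x'"
  shows "integrable (PX M e) (\<lambda>x. g x * condY M e t S x)
    \<and> (\<integral>xu. g (fst xu) * mY M e (fst xu) (snd xu) t \<partial>PXU M e) = (\<integral>x. g x * condY M e t S x \<partial>PX M e)"
proof -
  let ?B = "baseX M"
  let ?A = "PiM S (nuX M)"
  let ?C = "PiM (UNIV - S) (nuX M)"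
  let ?U = "nuU M"
  define mg :: "('d \<Rightarrow> real) \<times> ('d \<Rightarrow> real) \<Rightarrow> 'd \<Rightarrow> real" where "mg = merge S (UNIV - S)"
  define T where "T = (\<lambda>q. (mg (fst q), snd q :: 'p \<Rightarrow> real))"
  define f' where "f' = (\<lambda>xu. dXU M e (fst xu) (snd xu))"
  define m' where "m' = (\<lambda>xu. mY M e (fst xu) (snd xu) t)"
  define cY where "cY = condY M e t S"
  interpret P: product_sigma_finite "nuX M" by (rule psf[OF model])
  have sfU: "sigma_finite_measure ?U" by (rule sf_U[OF model])
  have distr_mg: "distr (?A \<Otimes>\<^sub>M ?C) ?B mg = ?B"
    using P.distr_merge[of S "UNIV - S"] by (simp add: baseX_def mg_def)
  have mg_meas[measurable]: "mg \<in> measurable (?A \<Otimes>\<^sub>M ?C) ?B"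
    using measurable_merge[of S "UNIV - S" "nuX M"] by (simp add: baseX_def mg_def)
  have T_meas[measurable]: "T \<in> measurable ((?A \<Otimes>\<^sub>M ?C) \<Otimes>\<^sub>M ?U) (?B \<Otimes>\<^sub>M ?U)"
    unfolding T_def by measurable
  have BU: "?B \<Otimes>\<^sub>M ?U = distr ((?A \<Otimes>\<^sub>M ?C) \<Otimes>\<^sub>M ?U) (?B \<Otimes>\<^sub>M ?U) T"
  proof -
    have "distr (?A \<Otimes>\<^sub>M ?C) ?B mg \<Otimes>\<^sub>M distr ?U ?U (\<lambda>x. x)
        = distr ((?A \<Otimes>\<^sub>M ?C) \<Otimes>\<^sub>M ?U) (?B \<Otimes>\<^sub>M ?U) (\<lambda>(x,y). (mg x, y))"
      by (rule pair_measure_distr[OF mg_meas measurable_ident_sets[OF refl]]) (simp add: sfU)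
    then show ?thesis using distr_mg by (simp add: T_def split_beta')
  qed
  have fm[measurable]: "f' \<in> borel_measurable (?B \<Otimes>\<^sub>M ?U)" unfolding f'_def by (rule meas_dXU[OF model e])
  have mm[measurable]: "m' \<in> borel_measurable (?B \<Otimes>\<^sub>M ?U)" unfolding m'_def by (rule meas_mY[OF model e t])
  have fnn: "\<And>xu. 0 \<le> f' xu" using model e unfolding model_ok_def f'_def by auto
  have prob: "prob_space (PXU M e)" using model e unfolding model_ok_def by auto
  have intabs: "integrable (PXU M e) (\<lambda>xu. \<integral>y. \<bar>y\<bar> \<partial>PY M e (fst xu) (snd xu) t)"
    using model e t unfolding model_ok_def by auto
  have PXU_eq: "PXU M e = density (?B \<Otimes>\<^sub>M ?U) f'" unfolding PXU_def f'_def by simp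
  have intm: "integrable (PXU M e) m'"
  proof (rule Bochner_Integration.integrable_bound[OF intabs])
    show "m' \<in> borel_measurable (PXU M e)" unfolding PXU_eq by simp
    show "AE xu in PXU M e. norm (m' xu) \<le> norm (\<integral>y. \<bar>y\<bar> \<partial>PY M e (fst xu) (snd xu) t)"
    proof (rule AE_I2)
      fix xu :: "('d \<Rightarrow> real) \<times> ('p \<Rightarrow> real)"
      have "norm (m' xu) \<le> (\<integral>y. norm y \<partial>PY M e (fst xu) (snd xu) t)"
        unfolding m'_def mY_def by (rule integral_norm_bound)
      also have "\<dots> \<le> norm (\<integral>y. \<bar>y\<bar> \<partial>PY M e (fst xu) (snd xu) t)" by simp
      finally show "norm (m' xu) \<le> norm (\<integral>y. \<bar>y\<bar> \<partial>PY M e (fst xu) (snd xu) t)" .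
    qed
  qed
  have int_fm: "integrable (?B \<Otimes>\<^sub>M ?U) (\<lambda>xu. f' xu * m' xu)"
    using intm unfolding PXU_eq by (subst (asm) integrable_density) (auto simp: fnn)
  have int_f: "integrable (?B \<Otimes>\<^sub>M ?U) f'"
  proof -
    have "integrable (PXU M e) (\<lambda>_. 1::real)"
      using prob by (simp add: prob_space_def finite_measure.integrable_const)
    then show ?thesis unfolding PXU_eq by (subst (asm) integrable_density) (auto simp: fnn)
  qed
  have sfA: "sigma_finite_measure ?A" by (rule sf_PiM[OF model])
  have sfC: "sigma_finite_measure ?C" by (rule sf_PiM[OF model])
  interpret ACU: pair_sigma_finite "?A \<Otimes>\<^sub>M ?C" ?U
  proof -
    interpret A: sigma_finite_measure ?A by (rule sfA)
    interpret C: sigma_finite_measure ?C by (rule sfC)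
    interpret U: sigma_finite_measure ?U by (rule sfU)
    interpret AC: pair_sigma_finite ?A ?C ..
    show "pair_sigma_finite (?A \<Otimes>\<^sub>M ?C) ?U" ..
  qed
  have coordA: "\<forall>i\<in>S. (\<lambda>x. x i) \<in> borel_measurable ?A"
  proof
    fix i assume "i \<in> S"
    then have "(\<lambda>x. x i) \<in> measurable ?A (nuX M i)" by (rule measurable_component_singleton)
    then show "(\<lambda>x. x i) \<in> borel_measurable ?A" by (subst (asm) measurable_cong_sets[OF refl sets_nuX[OF model]])
  qed
  have coordB: "\<forall>i\<in>S. (\<lambda>x. x i) \<in> borel_measurable ?B"
  proof
    fix i assume "i \<in> S"
    have "(\<lambda>x. x i) \<in> measurable ?B (nuX M i)" unfolding baseX_def by (rule measurable_component_singleton) simp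
    then show "(\<lambda>x. x i) \<in> borel_measurable ?B" by (subst (asm) measurable_cong_sets[OF refl sets_nuX[OF model]])
  qed
  have ccA[measurable]: "cY \<in> borel_measurable ?A" unfolding cY_def using meas_condY[OF model e t coordA] by simp
  have ccB[measurable]: "cY \<in> borel_measurable ?B" unfolding cY_def using meas_condY[OF model e t coordB] by simp
  have intMF: "integrable ((?A \<Otimes>\<^sub>M ?C) \<Otimes>\<^sub>M ?U) (\<lambda>q. m' (T q) * f' (T q))"
  proof -
    have "integrable (distr ((?A \<Otimes>\<^sub>M ?C) \<Otimes>\<^sub>M ?U) (?B \<Otimes>\<^sub>M ?U) T) (\<lambda>xu. m' xu * f' xu)"
      using int_fm by (simp only: BU[symmetric] mult.commute)
    then show ?thesis by (subst (asm) integrable_distr_eq) auto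
  qed
  have intF: "integrable ((?A \<Otimes>\<^sub>M ?C) \<Otimes>\<^sub>M ?U) (\<lambda>q. f' (T q))"
  proof -
    have "integrable (distr ((?A \<Otimes>\<^sub>M ?C) \<Otimes>\<^sub>M ?U) (?B \<Otimes>\<^sub>M ?U) T) f'"
      using int_f by (simp only: BU[symmetric])
    then show ?thesis by (subst (asm) integrable_distr_eq) auto
  qed
  have mg_S: "\<forall>i\<in>S. mg p i = fst p i" for p unfolding mg_def merge_def by (auto simp: split_beta')
  have cc_eq: "cY a = (\<integral>z. (\<integral>u. m' (T ((a,z),u)) * f' (T ((a,z),u)) \<partial>?U) \<partial>?C)
          / (\<integral>z. (\<integral>u. f' (T ((a,z),u)) \<partial>?U) \<partial>?C)" for a
    unfolding cY_def condY_def mergeS_merge mg_def T_def f'_def m'_def by simp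
  have Pg_const: "g (mg (a,z)) = g (mg (a,z'))" if "mg (a,z) \<in> Xsp M" "mg (a,z') \<in> Xsp M" for a z z'
    by (rule gS[OF that]) (use mg_S in simp)
  have aeX: "AE xu in PXU M e. fst xu \<in> Xsp M" using model e unfolding model_ok_def by auto
  then have "AE xu in ?B \<Otimes>\<^sub>M ?U. 0 < f' xu \<longrightarrow> fst xu \<in> Xsp M"
    unfolding PXU_eq by (subst (asm) AE_density) auto
  then obtain N where N: "{xu \<in> space (?B \<Otimes>\<^sub>M ?U). \<not> (0 < f' xu \<longrightarrow> fst xu \<in> Xsp M)} \<subseteq> N"
      "emeasure (?B \<Otimes>\<^sub>M ?U) N = 0" "N \<in> sets (?B \<Otimes>\<^sub>M ?U)"
    by (rule AE_E)
  have "AE xu in ?B \<Otimes>\<^sub>M ?U. xu \<notin> N" by (rule AE_not_in) (use N in \<open>simp add: null_sets_def\<close>)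
  then have "AE xu in distr ((?A \<Otimes>\<^sub>M ?C) \<Otimes>\<^sub>M ?U) (?B \<Otimes>\<^sub>M ?U) T. xu \<notin> N"
    by (simp only: BU[symmetric])
  then have "AE q in (?A \<Otimes>\<^sub>M ?C) \<Otimes>\<^sub>M ?U. T q \<notin> N"
  proof (subst (asm) AE_distr_iff)
    show "{x \<in> space (?B \<Otimes>\<^sub>M ?U). x \<notin> N} \<in> sets (?B \<Otimes>\<^sub>M ?U)"
    proof -
      have "{x \<in> space (?B \<Otimes>\<^sub>M ?U). x \<notin> N} = space (?B \<Otimes>\<^sub>M ?U) - N" by auto
      then show ?thesis using N(3) by auto
    qed
  qed auto
  from ACU.AE_pair[OF this]
  have good: "AE p in ?A \<Otimes>\<^sub>M ?C. AE u in ?U. f' (T (p,u)) \<noteq> 0 \<longrightarrow> mg p \<in> Xsp M"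
  proof eventually_elim
    case (elim p)
    from elim AE_space show ?case
    proof eventually_elim
      case (elim u)
      have sp: "T (p,u) \<in> space (?B \<Otimes>\<^sub>M ?U)"
        using elim(2) by (simp add: T_def space_pair_measure space_baseX[OF model])
      show ?case
      proof
        assume "f' (T (p,u)) \<noteq> 0"
        with fnn have "0 < f' (T (p,u))" by (simp add: less_le)
        with sp elim(1) N(1) have "fst (T (p,u)) \<in> Xsp M" by blast
        then show "mg p \<in> Xsp M" by (simp add: T_def)
      qed
    qed
  qed
  note core = core_tower[where A = ?A and C = ?C and U = ?U and F = "\<lambda>q. f' (T q)" and Mm = "\<lambda>q. m' (T q)"
      and G = "\<lambda>p. g (mg p)" and cc = cY and Pg = "\<lambda>p. mg p \<in> Xsp M",
      OF sfA sfC sfU _ _ _ intMF intF _ _ ccA cc_eq good Pg_const]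
  have core1: "integrable ((?A \<Otimes>\<^sub>M ?C) \<Otimes>\<^sub>M ?U) (\<lambda>q. f' (T q) * (g (mg (fst q)) * cY (fst (fst q))))"
    using core(1) gb fnn by simp
  have core2: "(\<integral>q. f' (T q) * (g (mg (fst q)) * m' (T q)) \<partial>((?A \<Otimes>\<^sub>M ?C) \<Otimes>\<^sub>M ?U))
      = (\<integral>q. f' (T q) * (g (mg (fst q)) * cY (fst (fst q))) \<partial>((?A \<Otimes>\<^sub>M ?C) \<Otimes>\<^sub>M ?U))"
    using core(2) gb fnn by simp
  have cY_mg: "cY (mg p) = cY (fst p)" for p
    unfolding cY_def by (rule condY_cong) (use mg_S in simp)
  have fstm: "fst \<in> measurable (PXU M e) ?B" unfolding PXU_eq by simp
  have PX_eq: "PX M e = distr (PXU M e) ?B fst" unfolding PX_def by simp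
  have transfer: "(\<integral>xu. \<phi> xu \<partial>PXU M e) = (\<integral>q. f' (T q) * \<phi> (T q) \<partial>((?A \<Otimes>\<^sub>M ?C) \<Otimes>\<^sub>M ?U))
     \<and> (integrable (PXU M e) \<phi> \<longleftrightarrow> integrable ((?A \<Otimes>\<^sub>M ?C) \<Otimes>\<^sub>M ?U) (\<lambda>q. f' (T q) * \<phi> (T q)))"
    if pm[measurable]: "\<phi> \<in> borel_measurable (?B \<Otimes>\<^sub>M ?U)" for \<phi>
  proof
    have "(\<integral>xu. \<phi> xu \<partial>PXU M e) = (\<integral>xu. f' xu * \<phi> xu \<partial>(?B \<Otimes>\<^sub>M ?U))"
      unfolding PXU_eq by (subst integral_density) (auto simp: fnn)
    also have "\<dots> = (\<integral>xu. f' xu * \<phi> xu \<partial>distr ((?A \<Otimes>\<^sub>M ?C) \<Otimes>\<^sub>M ?U) (?B \<Otimes>\<^sub>M ?U) T)"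
      by (simp only: BU[symmetric])
    also have "\<dots> = (\<integral>q. f' (T q) * \<phi> (T q) \<partial>((?A \<Otimes>\<^sub>M ?C) \<Otimes>\<^sub>M ?U))"
      by (rule integral_distr) auto
    finally show "(\<integral>xu. \<phi> xu \<partial>PXU M e) = (\<integral>q. f' (T q) * \<phi> (T q) \<partial>((?A \<Otimes>\<^sub>M ?C) \<Otimes>\<^sub>M ?U))" .
    have "integrable (PXU M e) \<phi> \<longleftrightarrow> integrable (?B \<Otimes>\<^sub>M ?U) (\<lambda>xu. f' xu * \<phi> xu)"
      unfolding PXU_eq by (subst integrable_density) (auto simp: fnn)
    also have "\<dots> \<longleftrightarrow> integrable (distr ((?A \<Otimes>\<^sub>M ?C) \<Otimes>\<^sub>M ?U) (?B \<Otimes>\<^sub>M ?U) T) (\<lambda>xu. f' xu * \<phi> xu)"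
      by (simp only: BU[symmetric])
    also have "\<dots> \<longleftrightarrow> integrable ((?A \<Otimes>\<^sub>M ?C) \<Otimes>\<^sub>M ?U) (\<lambda>q. f' (T q) * \<phi> (T q))"
      by (rule integrable_distr_eq) auto
    finally show "integrable (PXU M e) \<phi> \<longleftrightarrow> integrable ((?A \<Otimes>\<^sub>M ?C) \<Otimes>\<^sub>M ?U) (\<lambda>q. f' (T q) * \<phi> (T q))" .
  qed
  have fstT: "fst (T q) = mg (fst q)" for q by (simp add: T_def)
  have tL: "(\<integral>xu. g (fst xu) * m' xu \<partial>PXU M e)
      = (\<integral>q. f' (T q) * (g (mg (fst q)) * m' (T q)) \<partial>((?A \<Otimes>\<^sub>M ?C) \<Otimes>\<^sub>M ?U))"
    using transfer[of "\<lambda>xu. g (fst xu) * m' xu"] by (simp add: fstT)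
  have tR: "(\<integral>xu. g (fst xu) * cY (fst xu) \<partial>PXU M e)
      = (\<integral>q. f' (T q) * (g (mg (fst q)) * cY (fst (fst q))) \<partial>((?A \<Otimes>\<^sub>M ?C) \<Otimes>\<^sub>M ?U))"
    and iR: "integrable (PXU M e) (\<lambda>xu. g (fst xu) * cY (fst xu))"
    using transfer[of "\<lambda>xu. g (fst xu) * cY (fst xu)"] core1 by (simp_all add: fstT cY_mg)
  have "integrable (PX M e) (\<lambda>x. g x * cY x)"
    unfolding PX_eq by (subst integrable_distr_eq[OF fstm]) (use iR in auto)
  moreover have "(\<integral>x. g x * cY x \<partial>PX M e) = (\<integral>xu. g (fst xu) * cY (fst xu) \<partial>PXU M e)"
    unfolding PX_eq by (rule integral_distr[OF fstm]) simp
  ultimately show ?thesis using tL tR core2 unfolding cY_def m'_def by simp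
qed

lemma int_mY:
  assumes model: "model_ok M E" and e: "e \<in> E" and t: "t \<in> Trt M"
  shows "integrable (PXU M e) (\<lambda>xu. mY M e (fst xu) (snd xu) t)"
proof (rule Bochner_Integration.integrable_bound)
  show "integrable (PXU M e) (\<lambda>xu. \<integral>y. \<bar>y\<bar> \<partial>PY M e (fst xu) (snd xu) t)"
    using model e t unfolding model_ok_def by auto
  show "(\<lambda>xu. mY M e (fst xu) (snd xu) t) \<in> borel_measurable (PXU M e)"
    unfolding PXU_def using meas_mY[OF model e t] by simp
  show "AE xu in PXU M e. norm (mY M e (fst xu) (snd xu) t) \<le> norm (\<integral>y. \<bar>y\<bar> \<partial>PY M e (fst xu) (snd xu) t)"
  proof (rule AE_I2)
    fix xu :: "('a \<Rightarrow> real) \<times> ('b \<Rightarrow> real)"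
    have "norm (mY M e (fst xu) (snd xu) t) \<le> (\<integral>y. norm y \<partial>PY M e (fst xu) (snd xu) t)"
      unfolding mY_def by (rule integral_norm_bound)
    also have "\<dots> \<le> norm (\<integral>y. \<bar>y\<bar> \<partial>PY M e (fst xu) (snd xu) t)" by simp
    finally show "norm (mY M e (fst xu) (snd xu) t) \<le> norm (\<integral>y. \<bar>y\<bar> \<partial>PY M e (fst xu) (snd xu) t)" .
  qed
qed

lemma fst_meas_PXU: "fst \<in> measurable (PXU M e) (baseX M)"
  unfolding PXU_def by simp

lemma aeX_PXU: "model_ok M E \<Longrightarrow> e \<in> E \<Longrightarrow> AE xu in PXU M e. fst xu \<in> Xsp M"
  unfolding model_ok_def by auto

lemma PX_cong:
  assumes model: "model_ok M E" and e: "e \<in> E"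
    and h1[measurable]: "h1 \<in> borel_measurable (baseX M)" and h2[measurable]: "h2 \<in> borel_measurable (baseX M)"
    and eq: "\<And>x. x \<in> Xsp M \<Longrightarrow> h1 x = h2 x"
  shows "integral\<^sup>L (PX M e) h1 = integral\<^sup>L (PX M e) h2 \<and> (integrable (PX M e) h1 \<longleftrightarrow> integrable (PX M e) (h2 :: _ \<Rightarrow> real))"
proof -
  have m1: "(\<lambda>xu. h1 (fst xu)) \<in> borel_measurable (PXU M e)" 
    using measurable_compose[OF fst_meas_PXU h1] by simp
  have m2: "(\<lambda>xu. h2 (fst xu)) \<in> borel_measurable (PXU M e)" 
    using measurable_compose[OF fst_meas_PXU h2] by simp
  have ae: "AE xu in PXU M e. h1 (fst xu) = h2 (fst xu)"
    using aeX_PXU[OF model e] by eventually_elim (simp add: eq)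
  have "integral\<^sup>L (PX M e) h1 = (\<integral>xu. h1 (fst xu) \<partial>PXU M e)"
    unfolding PX_def by (rule integral_distr[OF fst_meas_PXU h1])
  also have "\<dots> = (\<integral>xu. h2 (fst xu) \<partial>PXU M e)" by (rule integral_cong_AE[OF m1 m2 ae])
  also have "\<dots> = integral\<^sup>L (PX M e) h2"
    unfolding PX_def by (rule integral_distr[OF fst_meas_PXU h2, symmetric])
  finally have i: "integral\<^sup>L (PX M e) h1 = integral\<^sup>L (PX M e) h2" .
  have "integrable (PX M e) h1 \<longleftrightarrow> integrable (PXU M e) (\<lambda>xu. h1 (fst xu))"
    unfolding PX_def by (rule integrable_distr_eq[OF fst_meas_PXU h1])
  also have "\<dots> \<longleftrightarrow> integrable (PXU M e) (\<lambda>xu. h2 (fst xu))" by (rule integrable_cong_AE[OF m1 m2 ae])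
  also have "\<dots> \<longleftrightarrow> integrable (PX M e) h2"
    unfolding PX_def by (rule integrable_distr_eq[OF fst_meas_PXU h2, symmetric])
  finally show ?thesis using i by simp
qed

lemma PX_mono:
  assumes model: "model_ok M E" and e: "e \<in> E"
    and h1[measurable]: "h1 \<in> borel_measurable (baseX M)" and h2[measurable]: "h2 \<in> borel_measurable (baseX M)"
    and i1: "integrable (PX M e) h1" and i2: "integrable (PX M e) h2"
    and le: "\<And>x. x \<in> Xsp M \<Longrightarrow> h1 x \<le> (h2 x :: real)"
  shows "integral\<^sup>L (PX M e) h1 \<le> integral\<^sup>L (PX M e) h2"
proof -
  have j1: "integrable (PXU M e) (\<lambda>xu. h1 (fst xu))"
    using i1 unfolding PX_def by (subst (asm) integrable_distr_eq[OF fst_meas_PXU h1])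
  have j2: "integrable (PXU M e) (\<lambda>xu. h2 (fst xu))"
    using i2 unfolding PX_def by (subst (asm) integrable_distr_eq[OF fst_meas_PXU h2])
  have ae: "AE xu in PXU M e. h1 (fst xu) \<le> h2 (fst xu)"
    using aeX_PXU[OF model e] by eventually_elim (simp add: le)
  have "integral\<^sup>L (PX M e) h1 = (\<integral>xu. h1 (fst xu) \<partial>PXU M e)"
    unfolding PX_def by (rule integral_distr[OF fst_meas_PXU h1])
  also have "\<dots> \<le> (\<integral>xu. h2 (fst xu) \<partial>PXU M e)" by (rule integral_mono_AE[OF j1 j2 ae])
  also have "\<dots> = integral\<^sup>L (PX M e) h2"
    unfolding PX_def by (rule integral_distr[OF fst_meas_PXU h2, symmetric])
  finally show ?thesis .
qed

lemma coord_baseX: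
  assumes model: "model_ok M E" shows "(\<lambda>x. x i) \<in> borel_measurable (baseX M)"
proof -
  have "(\<lambda>x. x i) \<in> measurable (baseX M) (nuX M i)" unfolding baseX_def by (rule measurable_component_singleton) simp
  then show ?thesis by (subst (asm) measurable_cong_sets[OF refl sets_nuX[OF model]])
qed

lemma meas_condY_B:
  fixes M :: "('d::finite, 'p) model"
  assumes model: "model_ok M E" and e: "e \<in> E" and t: "t \<in> Trt M"
  shows "(\<lambda>x. condY M e t S x) \<in> borel_measurable (baseX M)"
  by (rule meas_condY[OF model e t]) (simp add: coord_baseX[OF model])

lemma tbase_Trt: "model_ok M E \<Longrightarrow> tbase M \<in> Trt M"
  unfolding model_ok_def by auto

lemma finite_Trt: "finite (Trt M)" unfolding Trt_def by simp

lemma meas_tauS: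
  fixes M :: "('d::finite, 'p) model"
  assumes model: "model_ok M E" and e: "e \<in> E" and t: "t \<in> Trt M"
  shows "(\<lambda>x. tauS M e S x t) \<in> borel_measurable (baseX M)"
  unfolding tauS_def using meas_condY_B[OF model e t] meas_condY_B[OF model e tbase_Trt[OF model]] by measurable

lemma policy_bounds:
  assumes "is_policy M pol" "x \<in> Xsp M" "t \<in> Trt M"
  shows "0 \<le> pol x t" "pol x t \<le> 1"
proof -
  have nn: "\<forall>t\<in>Trt M. 0 \<le> pol x t" and s: "(\<Sum>t\<in>Trt M. pol x t) = 1"
    using assms unfolding is_policy_def by auto
  show "0 \<le> pol x t" using nn assms(3) by auto
  have "pol x t \<le> (\<Sum>t\<in>Trt M. pol x t)" by (rule member_le_sum) (use nn assms(3) finite_Trt in auto)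
  then show "pol x t \<le> 1" using s by simp
qed

lemma sum_delta_mult: "finite A \<Longrightarrow> a \<in> A \<Longrightarrow> (\<Sum>t\<in>A. (if t = a then 1 else 0) * f t) = (f a :: real)"
proof -
  assume "finite A" "a \<in> A"
  have "(\<Sum>t\<in>A. (if t = a then 1 else 0) * f t) = (\<Sum>t\<in>A. if t = a then f t else 0)" by (rule sum.cong) auto
  then show ?thesis using \<open>finite A\<close> \<open>a \<in> A\<close> by simp
qed

lemma EY_diff:
  fixes M :: "('d::finite, 'p) model" and pol :: "('d \<Rightarrow> real) \<Rightarrow> nat \<Rightarrow> real"
  assumes model: "model_ok M E" and e: "e \<in> E" and pol: "is_policy M pol"
    and dep: "\<And>x x' t. x \<in> Xsp M \<Longrightarrow> x' \<in> Xsp M \<Longrightarrow> (\<forall>i\<in>S. x i = x' i) \<Longrightarrow> t \<in> Trt M \<Longrightarrow> pol x t = pol x' t"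
  shows "(\<forall>t\<in>Trt M. integrable (PX M e) (\<lambda>x. tauS M e S x t * pol x t))
    \<and> EY M e pol - EY M e (const_pol (tbase M)) = (\<integral>x. (\<Sum>t\<in>Trt M. tauS M e S x t * pol x t) \<partial>PX M e)"
proof -
  define t0 where "t0 = tbase M"
  have t0: "t0 \<in> Trt M" unfolding t0_def by (rule tbase_Trt[OF model])
  define cl where "cl t x = max 0 (min 1 (pol x t))" for t x
  have polm[measurable]: "(\<lambda>x. pol x t) \<in> borel_measurable (baseX M)" for t
    using pol unfolding is_policy_def by auto
  have clm[measurable]: "cl t \<in> borel_measurable (baseX M)" for t unfolding cl_def by measurable
  have clb: "\<bar>cl t x\<bar> \<le> 1" for t x unfolding cl_def by auto
  have cl_eq: "cl t x = pol x t" if "x \<in> Xsp M" "t \<in> Trt M" for t x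
    using policy_bounds[OF pol that] unfolding cl_def by auto
  have cldep: "cl t x = cl t x'" if "t \<in> Trt M" "x \<in> Xsp M" "x' \<in> Xsp M" "\<forall>i\<in>S. x i = x' i" for t x x'
    using dep[OF that(2-4) that(1)] unfolding cl_def by simp
  define cY where "cY t x = condY M e t S x" for t x
  define m where "m t xu = mY M e (fst xu) (snd xu) t" for t xu
  have cYm[measurable]: "cY t \<in> borel_measurable (baseX M)" if "t \<in> Trt M" for t
    unfolding cY_def using meas_condY_B[OF model e that] by simp
  have mm[measurable]: "m t \<in> borel_measurable (PXU M e)" if "t \<in> Trt M" for t
    unfolding m_def PXU_def using meas_mY[OF model e that] by simp
  have T1: "integrable (PX M e) (\<lambda>x. cl t x * cY t x)
      \<and> (\<integral>xu. cl t (fst xu) * m t xu \<partial>PXU M e) = (\<integral>x. cl t x * cY t x \<partial>PX M e)" if t: "t \<in> Trt M" for t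
    unfolding cY_def m_def by (rule tower[OF model e t clm clb cldep[OF t]])
  have T0: "integrable (PX M e) (\<lambda>x. cl t x * cY t0 x)" if t: "t \<in> Trt M" for t
    using tower[OF model e t0 clm clb cldep[OF t]] unfolding cY_def by blast
  have Tone: "integrable (PX M e) (\<lambda>x. 1 * cY t0 x)
      \<and> (\<integral>xu. 1 * m t0 xu \<partial>PXU M e) = (\<integral>x. 1 * cY t0 x \<partial>PX M e)"
    unfolding cY_def m_def by (rule tower[OF model e t0]) auto
  have polcl1: "integral\<^sup>L (PX M e) (\<lambda>x. cl t x * cY s x) = integral\<^sup>L (PX M e) (\<lambda>x. pol x t * cY s x)
      \<and> (integrable (PX M e) (\<lambda>x. cl t x * cY s x) \<longleftrightarrow> integrable (PX M e) (\<lambda>x. pol x t * cY s x))"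
    if "t \<in> Trt M" "s \<in> Trt M" for t s
    by (rule PX_cong[OF model e]) (use that cl_eq in \<open>auto intro: that\<close>)
  have intP1: "integrable (PX M e) (\<lambda>x. pol x t * cY t x)" if "t \<in> Trt M" for t
    using polcl1[OF that that] T1[OF that] by simp
  have intP0: "integrable (PX M e) (\<lambda>x. pol x t * cY t0 x)" if "t \<in> Trt M" for t
    using polcl1[OF that t0] T0[OF that] by simp
  have int_pm: "integrable (PXU M e) (\<lambda>xu. pol (fst xu) t * m t xu)" if t: "t \<in> Trt M" for t
  proof (rule Bochner_Integration.integrable_bound[OF int_mY[OF model e t]])
    show "(\<lambda>xu. pol (fst xu) t * m t xu) \<in> borel_measurable (PXU M e)"
      using measurable_compose[OF fst_meas_PXU polm] mm[OF t] by measurable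
    show "AE xu in PXU M e. norm (pol (fst xu) t * m t xu) \<le> norm (mY M e (fst xu) (snd xu) t)"
      using aeX_PXU[OF model e]
    proof eventually_elim
      case (elim xu)
      have "\<bar>pol (fst xu) t\<bar> * \<bar>m t xu\<bar> \<le> 1 * \<bar>m t xu\<bar>"
        by (rule mult_right_mono) (use policy_bounds[OF pol elim t] in auto)
      then show ?case by (simp add: abs_mult m_def)
    qed
  qed
  have EYpol: "EY M e pol = (\<Sum>t\<in>Trt M. \<integral>x. pol x t * cY t x \<partial>PX M e)"
  proof -
    have "EY M e pol = (\<integral>xu. (\<Sum>t\<in>Trt M. pol (fst xu) t * m t xu) \<partial>PXU M e)"
      unfolding EY_def m_def by simp
    also have "\<dots> = (\<Sum>t\<in>Trt M. \<integral>xu. pol (fst xu) t * m t xu \<partial>PXU M e)"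
      by (rule Bochner_Integration.integral_sum) (rule int_pm)
    also have "\<dots> = (\<Sum>t\<in>Trt M. \<integral>x. pol x t * cY t x \<partial>PX M e)"
    proof (rule sum.cong[OF refl])
      fix t assume t: "t \<in> Trt M"
      have "(\<integral>xu. pol (fst xu) t * m t xu \<partial>PXU M e) = (\<integral>xu. cl t (fst xu) * m t xu \<partial>PXU M e)"
      proof (rule integral_cong_AE)
        show "(\<lambda>xu. pol (fst xu) t * m t xu) \<in> borel_measurable (PXU M e)"
          using measurable_compose[OF fst_meas_PXU polm] mm[OF t] by measurable
        show "(\<lambda>xu. cl t (fst xu) * m t xu) \<in> borel_measurable (PXU M e)"
          using measurable_compose[OF fst_meas_PXU clm] mm[OF t] by measurable
        show "AE xu in PXU M e. pol (fst xu) t * m t xu = cl t (fst xu) * m t xu"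
          using aeX_PXU[OF model e] by eventually_elim (simp add: cl_eq t)
      qed
      also have "\<dots> = (\<integral>x. cl t x * cY t x \<partial>PX M e)" using T1[OF t] by simp
      also have "\<dots> = (\<integral>x. pol x t * cY t x \<partial>PX M e)" using polcl1[OF t t] by simp
      finally show "(\<integral>xu. pol (fst xu) t * m t xu \<partial>PXU M e) = (\<integral>x. pol x t * cY t x \<partial>PX M e)" .
    qed
    finally show ?thesis .
  qed
  have EYc: "EY M e (const_pol t0) = (\<Sum>t\<in>Trt M. \<integral>x. pol x t * cY t0 x \<partial>PX M e)"
  proof -
    have "EY M e (const_pol t0) = (\<integral>xu. 1 * m t0 xu \<partial>PXU M e)"
      unfolding EY_def m_def const_pol_def using t0 finite_Trt
      by (subst sum_delta_mult[OF finite_Trt t0]) simp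
    also have "\<dots> = (\<integral>x. 1 * cY t0 x \<partial>PX M e)" using Tone by simp
    also have "\<dots> = (\<integral>x. (\<Sum>t\<in>Trt M. pol x t * cY t0 x) \<partial>PX M e)"
    proof -
      have "\<And>x. x \<in> Xsp M \<Longrightarrow> 1 * cY t0 x = (\<Sum>t\<in>Trt M. pol x t * cY t0 x)"
        using pol unfolding is_policy_def by (simp add: sum_distrib_right[symmetric])
      then show ?thesis using PX_cong[OF model e, of "\<lambda>x. 1 * cY t0 x" "\<lambda>x. (\<Sum>t\<in>Trt M. pol x t * cY t0 x)"] t0
        by simp
    qed
    also have "\<dots> = (\<Sum>t\<in>Trt M. \<integral>x. pol x t * cY t0 x \<partial>PX M e)"
      by (rule Bochner_Integration.integral_sum) (rule intP0)
    finally show ?thesis .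
  qed
  have tau_eq: "tauS M e S x t * pol x t = pol x t * cY t x - pol x t * cY t0 x" for x t
    unfolding tauS_def cY_def t0_def by (simp add: algebra_simps)
  have int_tau: "integrable (PX M e) (\<lambda>x. tauS M e S x t * pol x t)" if t: "t \<in> Trt M" for t
    unfolding tau_eq using intP1[OF t] intP0[OF t] by (rule Bochner_Integration.integrable_diff)
  have "EY M e pol - EY M e (const_pol t0)
      = (\<Sum>t\<in>Trt M. (\<integral>x. pol x t * cY t x \<partial>PX M e) - (\<integral>x. pol x t * cY t0 x \<partial>PX M e))"
    using EYpol EYc by (simp add: sum_subtractf)
  also have "\<dots> = (\<Sum>t\<in>Trt M. \<integral>x. tauS M e S x t * pol x t \<partial>PX M e)"
    by (rule sum.cong[OF refl]) (simp add: tau_eq intP1 intP0)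
  also have "\<dots> = (\<integral>x. (\<Sum>t\<in>Trt M. tauS M e S x t * pol x t) \<partial>PX M e)"
    by (rule Bochner_Integration.integral_sum[symmetric]) (rule int_tau)
  finally show ?thesis using int_tau unfolding t0_def by blast
qed



lemma sum_delta_mult2: "finite A \<Longrightarrow> a \<in> A \<Longrightarrow> (\<Sum>t\<in>A. f t * (if t = a then 1 else 0)) = (f a :: real)"
proof -
  assume "finite A" "a \<in> A"
  have "(\<Sum>t\<in>A. f t * (if t = a then 1 else 0)) = (\<Sum>t\<in>A. if t = a then f t else 0)" by (rule sum.cong) auto
  then show ?thesis using \<open>finite A\<close> \<open>a \<in> A\<close> by simp
qed

lemma convex_le_Max:
  fixes \<tau> p :: "nat \<Rightarrow> real"
  assumes "finite T" "T \<noteq> {}" "\<forall>t\<in>T. 0 \<le> p t" "(\<Sum>t\<in>T. p t) = 1"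
  shows "(\<Sum>t\<in>T. \<tau> t * p t) \<le> Max (\<tau> ` T)"
proof -
  have "(\<Sum>t\<in>T. \<tau> t * p t) \<le> (\<Sum>t\<in>T. Max (\<tau> ` T) * p t)"
    by (rule sum_mono, rule mult_right_mono) (use assms in auto)
  also have "\<dots> = Max (\<tau> ` T)" using assms(4) by (simp add: sum_distrib_left[symmetric])
  finally show ?thesis .
qed

lemma opt_eq_Max:
  fixes \<tau> p :: "nat \<Rightarrow> real"
  assumes fin: "finite T" "T \<noteq> {}" and nn: "\<forall>t\<in>T. 0 \<le> p t" and s: "(\<Sum>t\<in>T. p t) = 1"
    and opt: "\<forall>t\<in>T. p t > 0 \<longrightarrow> (\<forall>t'\<in>T. \<tau> t' \<le> \<tau> t)"
  shows "(\<Sum>t\<in>T. \<tau> t * p t) = Max (\<tau> ` T)"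
proof -
  have "(\<Sum>t\<in>T. \<tau> t * p t) = (\<Sum>t\<in>T. Max (\<tau> ` T) * p t)"
  proof (rule sum.cong[OF refl])
    fix t assume t: "t \<in> T"
    show "\<tau> t * p t = Max (\<tau> ` T) * p t"
    proof (cases "p t > 0")
      case True
      with opt t have "\<forall>t'\<in>T. \<tau> t' \<le> \<tau> t" by auto
      then have "Max (\<tau> ` T) \<le> \<tau> t" using fin by (simp add: Max_le_iff)
      moreover have "\<tau> t \<le> Max (\<tau> ` T)" using fin t by simp
      ultimately show ?thesis by simp
    next
      case False
      with nn t have "p t = 0" by force
      then show ?thesis by simp
    qed
  qed
  also have "\<dots> = Max (\<tau> ` T)" using s by (simp add: sum_distrib_left[symmetric])
  finally show ?thesis .
qed

lemma meas_sum_pol: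
  fixes M :: "('d::finite, 'p) model"
  assumes model: "model_ok M E" and e: "e \<in> E" and pol: "is_policy M pol"
  shows "(\<lambda>x. \<Sum>t\<in>Trt M. tauS M e S x t * pol x t) \<in> borel_measurable (baseX M)"
proof (rule borel_measurable_sum, rule borel_measurable_times)
  fix t assume t: "t \<in> Trt M"
  show "(\<lambda>x. tauS M e S x t) \<in> borel_measurable (baseX M)" by (rule meas_tauS[OF model e t])
  show "(\<lambda>x. pol x t) \<in> borel_measurable (baseX M)" using pol unfolding is_policy_def by auto
qed

lemma is_policy_const:
  assumes "t \<in> Trt M" shows "is_policy M (const_pol t)"
  unfolding is_policy_def const_pol_def using assms finite_Trt[of M] by (simp add: sum.delta)

theorem theorem1:
  fixes M :: "('d::finite, 'p) model"
    and E :: "real set"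
    and n :: nat and envs :: "nat \<Rightarrow> real"
    and pols :: "nat \<Rightarrow> ('d \<Rightarrow> real) \<Rightarrow> nat \<Rightarrow> real"
    and Etr :: "real set" and etst etr :: real
    and piS :: "'d set \<Rightarrow> ('d \<Rightarrow> real) \<Rightarrow> nat \<Rightarrow> real"
    and Sstar :: "'d set"
  assumes model: "model_ok M E"
    and train_n: "n \<ge> 1"
    and train_envs: "\<forall>i<n. envs i \<in> E"
    and train_pols: "\<forall>i<n. is_policy M (pols i) \<and> (\<forall>x\<in>Xsp M. \<forall>t\<in>Trt M. pols i x t > 0)"
    and Etr_def: "Etr = envs ` {..<n}"
    and etst: "etst \<in> E"
    and ex_inv: "\<exists>S. e_inv M E S"
    and inv_tst: "\<forall>S. e_inv M Etr S \<longrightarrow> e_inv M (Etr \<union> eq_class M E etst) S"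
    and etr: "etr \<in> Etr"
    and piS_opt: "\<forall>S\<in>Einv M Etr. PiS_opt M Etr S (piS S)"
    and Sstar_in: "Sstar \<in> Einv M Etr"
    and Sstar_max: "\<forall>S\<in>Einv M Etr.
          (\<integral>x. (\<Sum>t\<in>Trt M. tauS M etr S x t * piS S x t) \<partial>PX M etst)
          \<le> (\<integral>x. (\<Sum>t\<in>Trt M. tauS M etr Sstar x t * piS Sstar x t) \<partial>PX M etst)"
  shows "Max ((\<lambda>t. EY M etst (const_pol t)) ` Trt M) \<le> EY M etst (piS Sstar)
     \<and> ((\<exists>e'\<in>eq_class M E etst. \<exists>S'\<in>Einv M E. \<forall>x\<in>Xsp M.
            Max ((\<lambda>t. tau M e' x t) ` Trt M) = Max ((\<lambda>t. tauS M e' S' x t) ` Trt M))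
        \<longrightarrow> (\<forall>pol. is_policy M pol \<longrightarrow> Vworst M E etst pol \<le> Vworst M E etst (piS Sstar)))"
proof -
  define t0 where "t0 = tbase M"
  have t0: "t0 \<in> Trt M" unfolding t0_def by (rule tbase_Trt[OF model])
  have Trt_ne: "Trt M \<noteq> {}" using t0 by auto
  have Etr_sub: "Etr \<subseteq> E" using Etr_def train_envs by auto
  have fin_Etr: "finite Etr" by (simp add: Etr_def)
  have etrE: "etr \<in> E" using etr Etr_sub by auto
  have card_pos: "card Etr > 0" using fin_Etr etr by (auto simp: card_gt_0_iff)
  have eqc_sub: "eq_class M E etst \<subseteq> E" by (auto simp: eq_class_def)
  have etst_eqc: "etst \<in> eq_class M E etst" by (simp add: eq_class_def etst)
  have PX_eqc: "PX M e = PX M etst" if "e \<in> eq_class M E etst" for e using that by (simp add: eq_class_def)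
  have einv_sub: "e_inv M Ed' S" if "e_inv M Ed S" "Ed' \<subseteq> Ed" for Ed Ed' S
    unfolding e_inv_def
  proof (intro ballI)
    fix e1 e2 x t assume h: "e1 \<in> Ed'" "e2 \<in> Ed'" "x \<in> Xsp M" "t \<in> Trt M"
    show "tauS M e1 S x t = tauS M e2 S x t"
      using that(1)[unfolded e_inv_def, rule_format, of e1 e2 x t] h that(2) by (simp add: subsetD)
  qed
  have F1: "tauS M e S x t = tauS M etr S x t"
    if "S \<in> Einv M Etr" "e \<in> eq_class M E etst" "x \<in> Xsp M" "t \<in> Trt M" for S e x t
  proof -
    have "e_inv M (Etr \<union> eq_class M E etst) S" using inv_tst that(1) by (simp add: Einv_def)
    then have H: "\<forall>e1\<in>Etr \<union> eq_class M E etst. \<forall>e2\<in>Etr \<union> eq_class M E etst. \<forall>x\<in>Xsp M. \<forall>t\<in>Trt M.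
        tauS M e1 S x t = tauS M e2 S x t" unfolding e_inv_def .
    show ?thesis using H[rule_format, of e etr x t] that etr by simp
  qed
  have avg: "(1 / real (card Etr)) * (\<Sum>e\<in>Etr. tauS M e S x t) = tauS M etr S x t"
    if "S \<in> Einv M Etr" "x \<in> Xsp M" "t \<in> Trt M" for S x t
  proof -
    have ei: "e_inv M Etr S" using that(1) by (simp add: Einv_def)
    have H: "\<forall>e1\<in>Etr. \<forall>e2\<in>Etr. \<forall>x\<in>Xsp M. \<forall>t\<in>Trt M. tauS M e1 S x t = tauS M e2 S x t"
      using ei unfolding e_inv_def .
    have eqs: "tauS M e S x t = tauS M etr S x t" if "e \<in> Etr" for e
      using bspec[OF bspec[OF bspec[OF bspec[OF H that] etr] \<open>x \<in> Xsp M\<close>] \<open>t \<in> Trt M\<close>] .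
    have "(\<Sum>e\<in>Etr. tauS M e S x t) = (\<Sum>e\<in>Etr. tauS M etr S x t)"
      by (rule sum.cong[OF refl]) (rule eqs)
    also have "\<dots> = real (card Etr) * tauS M etr S x t" by simp
    finally have "(\<Sum>e\<in>Etr. tauS M e S x t) = real (card Etr) * tauS M etr S x t" .
    moreover have "real (card Etr) \<noteq> 0" using card_pos by simp
    ultimately show ?thesis by simp
  qed
  have pso: "PiS_opt M Etr S (piS S)" if "S \<in> Einv M Etr" for S
    using piS_opt that by blast
  have ppol: "is_policy M (piS S)" if "S \<in> Einv M Etr" for S
    using pso[OF that] unfolding PiS_opt_def PiS_def by simp
  have popt: "\<forall>t'\<in>Trt M. tauS M etr S x t' \<le> tauS M etr S x t"
    if "S \<in> Einv M Etr" "x \<in> Xsp M" "t \<in> Trt M" "piS S x t > 0" for S x t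
  proof -
    have H: "\<forall>x\<in>Xsp M. \<forall>t\<in>Trt M. piS S x t > 0 \<longrightarrow>
        (\<forall>t'\<in>Trt M. (1 / real (card Etr)) * (\<Sum>e\<in>Etr. tauS M e S x t')
                    \<le> (1 / real (card Etr)) * (\<Sum>e\<in>Etr. tauS M e S x t))"
      using pso[OF that(1), unfolded PiS_opt_def, THEN conjunct2] .
    have "\<forall>t'\<in>Trt M. (1 / real (card Etr)) * (\<Sum>e\<in>Etr. tauS M e S x t')
                    \<le> (1 / real (card Etr)) * (\<Sum>e\<in>Etr. tauS M e S x t)"
      using mp[OF bspec[OF bspec[OF H that(2)] that(3)] that(4)] .
    then show ?thesis using avg[OF that(1,2)] that(3) by simp
  qed
  have pdep: "piS S x t = piS S x' t"
    if "S \<in> Einv M Etr" "x \<in> Xsp M" "x' \<in> Xsp M" "\<forall>i\<in>S. x i = x' i" "t \<in> Trt M" for S x x' t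
  proof -
    have "\<exists>pb. \<forall>x\<in>Xsp M. \<forall>t\<in>Trt M. piS S x t = pb (restrict x S) t"
      using pso[OF that(1)] unfolding PiS_opt_def PiS_def by simp
    then obtain pb where pb: "\<forall>x\<in>Xsp M. \<forall>t\<in>Trt M. piS S x t = pb (restrict x S) t" by blast
    have "restrict x S = restrict x' S" using that(4) by (auto simp: restrict_def fun_eq_iff)
    then show ?thesis using pb that by simp
  qed
  have O2: "(\<Sum>t\<in>Trt M. tauS M etr S x t * piS S x t) = Max ((\<lambda>t. tauS M etr S x t) ` Trt M)"
    if "S \<in> Einv M Etr" "x \<in> Xsp M" for S x
  proof -
    have nn: "\<forall>t\<in>Trt M. 0 \<le> piS S x t" and s: "(\<Sum>t\<in>Trt M. piS S x t) = 1"
      using ppol[OF that(1)] that(2) unfolding is_policy_def by auto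
    have op: "\<forall>t\<in>Trt M. piS S x t > 0 \<longrightarrow> (\<forall>t'\<in>Trt M. tauS M etr S x t' \<le> tauS M etr S x t)"
      using popt[OF that(1,2)] by blast
    show ?thesis by (rule opt_eq_Max[OF finite_Trt Trt_ne nn s op])
  qed
  have O1: "tauS M etr S x t' \<le> (\<Sum>t\<in>Trt M. tauS M etr S x t * piS S x t)"
    if "S \<in> Einv M Etr" "x \<in> Xsp M" "t' \<in> Trt M" for S x t'
    using O2[OF that(1,2)] Max_ge[OF finite_imageI[OF finite_Trt] imageI[OF that(3)], of "\<lambda>t. tauS M etr S x t"] by simp
  define J where "J S = (\<integral>x. (\<Sum>t\<in>Trt M. tauS M etr S x t * piS S x t) \<partial>PX M etst)" for S
  have Jfacts: "integrable (PX M etst) (\<lambda>x. \<Sum>t\<in>Trt M. tauS M etr S x t * piS S x t)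
      \<and> EY M e (piS S) - EY M e (const_pol t0) = J S"
    if S: "S \<in> Einv M Etr" and e: "e \<in> eq_class M E etst" for S e
  proof -
    have eE: "e \<in> E" using e eqc_sub by auto
    have D: "(\<forall>t\<in>Trt M. integrable (PX M e) (\<lambda>x. tauS M e S x t * piS S x t))
      \<and> EY M e (piS S) - EY M e (const_pol (tbase M)) = (\<integral>x. (\<Sum>t\<in>Trt M. tauS M e S x t * piS S x t) \<partial>PX M e)"
      by (rule EY_diff[OF model eE ppol[OF S]]) (rule pdep[OF S])
    have C: "integral\<^sup>L (PX M e) (\<lambda>x. \<Sum>t\<in>Trt M. tauS M e S x t * piS S x t)
        = integral\<^sup>L (PX M e) (\<lambda>x. \<Sum>t\<in>Trt M. tauS M etr S x t * piS S x t)
      \<and> (integrable (PX M e) (\<lambda>x. \<Sum>t\<in>Trt M. tauS M e S x t * piS S x t)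
        \<longleftrightarrow> integrable (PX M e) (\<lambda>x. \<Sum>t\<in>Trt M. tauS M etr S x t * piS S x t))"
      by (rule PX_cong[OF model eE meas_sum_pol[OF model eE ppol[OF S]] meas_sum_pol[OF model etrE ppol[OF S]]])
         (use F1[OF S e] in simp)
    have "integrable (PX M e) (\<lambda>x. \<Sum>t\<in>Trt M. tauS M e S x t * piS S x t)"
      using D by (intro Bochner_Integration.integrable_sum) auto
    then show ?thesis using C D PX_eqc[OF e] unfolding J_def t0_def by simp
  qed
  have Jle: "J S \<le> J Sstar" if "S \<in> Einv M Etr" for S
    using Sstar_max that unfolding J_def by blast
  have JSstar: "EY M e (piS Sstar) - EY M e (const_pol t0) = J Sstar" if "e \<in> eq_class M E etst" for e
    using Jfacts[OF Sstar_in that] by simp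
  obtain S0 where S0E: "e_inv M E S0" using ex_inv by blast
  have S0: "S0 \<in> Einv M Etr" using einv_sub[OF S0E Etr_sub] by (simp add: Einv_def)
  have part1: "EY M etst (const_pol t') \<le> EY M etst (piS Sstar)" if t': "t' \<in> Trt M" for t'
  proof -
    have D: "(\<forall>t\<in>Trt M. integrable (PX M etst) (\<lambda>x. tauS M etst S0 x t * const_pol t' x t))
      \<and> EY M etst (const_pol t') - EY M etst (const_pol (tbase M))
        = (\<integral>x. (\<Sum>t\<in>Trt M. tauS M etst S0 x t * const_pol t' x t) \<partial>PX M etst)"
      by (rule EY_diff[OF model etst is_policy_const[OF t']]) (simp add: const_pol_def)
    have sumc: "(\<Sum>t\<in>Trt M. tauS M etst S0 x t * const_pol t' x t) = tauS M etst S0 x t'" for x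
      unfolding const_pol_def by (rule sum_delta_mult2[OF finite_Trt t'])
    have int1: "integrable (PX M etst) (\<lambda>x. tauS M etst S0 x t')"
      using D[THEN conjunct1, rule_format, OF t'] by (simp add: const_pol_def)
    have "EY M etst (const_pol t') - EY M etst (const_pol t0) = (\<integral>x. tauS M etst S0 x t' \<partial>PX M etst)"
      using D unfolding t0_def sumc by simp
    also have "\<dots> \<le> J S0" unfolding J_def
    proof (rule PX_mono[OF model etst meas_tauS[OF model etst t'] meas_sum_pol[OF model etrE ppol[OF S0]] int1])
      show "integrable (PX M etst) (\<lambda>x. \<Sum>t\<in>Trt M. tauS M etr S0 x t * piS S0 x t)"
        using Jfacts[OF S0 etst_eqc] by simp
      fix x assume x: "x \<in> Xsp M"
      show "tauS M etst S0 x t' \<le> (\<Sum>t\<in>Trt M. tauS M etr S0 x t * piS S0 x t)"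
        using O1[OF S0 x t'] F1[OF S0 etst_eqc x t'] by simp
    qed
    also have "\<dots> \<le> J Sstar" by (rule Jle[OF S0])
    also have "\<dots> = EY M etst (piS Sstar) - EY M etst (const_pol t0)" using JSstar[OF etst_eqc] by simp
    finally show ?thesis by simp
  qed
  have partI: "Max ((\<lambda>t. EY M etst (const_pol t)) ` Trt M) \<le> EY M etst (piS Sstar)"
    using part1 by (simp add: finite_Trt Trt_ne)
  have VSstar: "Vworst M E etst (piS Sstar) = ereal (J Sstar)"
  proof -
    have "Vworst M E etst (piS Sstar) = (INF e\<in>eq_class M E etst. ereal (J Sstar))"
      unfolding Vworst_def t0_def[symmetric] by (rule INF_cong[OF refl]) (simp add: JSstar)
    also have "\<dots> = ereal (J Sstar)" using etst_eqc by (subst INF_constant) auto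
    finally show ?thesis .
  qed
  have partII: "(\<exists>e'\<in>eq_class M E etst. \<exists>S'\<in>Einv M E. \<forall>x\<in>Xsp M.
            Max ((\<lambda>t. tau M e' x t) ` Trt M) = Max ((\<lambda>t. tauS M e' S' x t) ` Trt M))
        \<longrightarrow> (\<forall>pol. is_policy M pol \<longrightarrow> Vworst M E etst pol \<le> Vworst M E etst (piS Sstar))"
  proof (intro impI allI)
    assume "\<exists>e'\<in>eq_class M E etst. \<exists>S'\<in>Einv M E. \<forall>x\<in>Xsp M.
            Max ((\<lambda>t. tau M e' x t) ` Trt M) = Max ((\<lambda>t. tauS M e' S' x t) ` Trt M)"
    then obtain e' S' where e': "e' \<in> eq_class M E etst" and S': "S' \<in> Einv M E"
      and hm: "\<forall>x\<in>Xsp M. Max ((\<lambda>t. tau M e' x t) ` Trt M) = Max ((\<lambda>t. tauS M e' S' x t) ` Trt M)"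
      by blast
    fix pol assume pol: "is_policy M pol"
    have e'E: "e' \<in> E" using e' eqc_sub by auto
    have S'E: "e_inv M E S'" using S' by (simp add: Einv_def)
    have S'tr: "S' \<in> Einv M Etr" using einv_sub[OF S'E Etr_sub] by (simp add: Einv_def)
    have D: "(\<forall>t\<in>Trt M. integrable (PX M e') (\<lambda>x. tauS M e' UNIV x t * pol x t))
      \<and> EY M e' pol - EY M e' (const_pol (tbase M)) = (\<integral>x. (\<Sum>t\<in>Trt M. tauS M e' UNIV x t * pol x t) \<partial>PX M e')"
      by (rule EY_diff[OF model e'E pol]) (simp add: fun_eq_iff[symmetric])
    have intL: "integrable (PX M etst) (\<lambda>x. \<Sum>t\<in>Trt M. tauS M e' UNIV x t * pol x t)"
      using D PX_eqc[OF e'] by (intro Bochner_Integration.integrable_sum) auto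
    have "EY M e' pol - EY M e' (const_pol t0) = (\<integral>x. (\<Sum>t\<in>Trt M. tauS M e' UNIV x t * pol x t) \<partial>PX M etst)"
      using D PX_eqc[OF e'] unfolding t0_def by simp
    also have "\<dots> \<le> J S'" unfolding J_def
    proof (rule PX_mono[OF model etst meas_sum_pol[OF model e'E pol] meas_sum_pol[OF model etrE ppol[OF S'tr]] intL])
      show "integrable (PX M etst) (\<lambda>x. \<Sum>t\<in>Trt M. tauS M etr S' x t * piS S' x t)"
        using Jfacts[OF S'tr etst_eqc] by simp
      fix x assume x: "x \<in> Xsp M"
      have nn: "\<forall>t\<in>Trt M. 0 \<le> pol x t" and s: "(\<Sum>t\<in>Trt M. pol x t) = 1"
        using pol x unfolding is_policy_def by auto
      have "(\<Sum>t\<in>Trt M. tauS M e' UNIV x t * pol x t) \<le> Max ((\<lambda>t. tauS M e' UNIV x t) ` Trt M)"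
        by (rule convex_le_Max[OF finite_Trt Trt_ne nn s])
      also have "\<dots> = Max ((\<lambda>t. tauS M e' S' x t) ` Trt M)" using hm x unfolding tau_def by simp
      also have "\<dots> = Max ((\<lambda>t. tauS M etr S' x t) ` Trt M)"
      proof -
        have H: "\<forall>e1\<in>E. \<forall>e2\<in>E. \<forall>x\<in>Xsp M. \<forall>t\<in>Trt M. tauS M e1 S' x t = tauS M e2 S' x t"
          using S'E unfolding e_inv_def .
        have "tauS M e' S' x t = tauS M etr S' x t" if "t \<in> Trt M" for t
          using bspec[OF bspec[OF bspec[OF bspec[OF H e'E] etrE] x] that] .
        then have "(\<lambda>t. tauS M e' S' x t) ` Trt M = (\<lambda>t. tauS M etr S' x t) ` Trt M"
          by (rule image_cong[OF refl])
        then show ?thesis by simp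
      qed
      also have "\<dots> = (\<Sum>t\<in>Trt M. tauS M etr S' x t * piS S' x t)" using O2[OF S'tr x] by simp
      finally show "(\<Sum>t\<in>Trt M. tauS M e' UNIV x t * pol x t) \<le> (\<Sum>t\<in>Trt M. tauS M etr S' x t * piS S' x t)" .
    qed
    also have "\<dots> \<le> J Sstar" by (rule Jle[OF S'tr])
    finally have le: "EY M e' pol - EY M e' (const_pol t0) \<le> J Sstar" .
    have "Vworst M E etst pol \<le> ereal (EY M e' pol - EY M e' (const_pol t0))"
      unfolding Vworst_def t0_def by (rule INF_lower[OF e'])
    also have "\<dots> \<le> ereal (J Sstar)" using le by simp
    finally show "Vworst M E etst pol \<le> Vworst M E etst (piS Sstar)" using VSstar by simp
  qed
  show ?thesis using partI partII by blast
qed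

end
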